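(* Let $G$ be a finite abelian group, $R=\mathbb Z[G]$, $n$ a positive integer, and $H$ a normal subgroup of $S_n$. Let $T=(G^n\rtimes S_n)/(G^n\rtimes H)$ (a set of $[S_n:H]$ cosets), and write $\bar a$ for the coset of $a\in G^n\rtimes S_n$. Then there is a $\hat G$-linear representation $\varphi_H:R[\mathbb M_T]\to R[\mathbb M_n]$ of $\mathbb M_n$ of dimension $[S_n:H]$ satisfying $$\varphi_H(x_{\bar a\bar b})=\sum_{\sigma\in P(\overline{ab^{-1}})}x_\sigma$$ for all $\bar a,\bar b\in T$, where $P(\overline{ab^{-1}})=\{\sigma\in S_n: G^n\times\{\sigma\}\subseteq\overline{ab^{-1}}\}$ and $x_\sigma=\prod_{k=1}^n x_{\sigma(k)k}$.
   Context: $\hat G=G\sqcup\{0\}\subseteq R=\mathbb Z[G]$. For a finite index set $T$, $R[\mathbb M_T]=R[x_{ij}\mid i,j\in T]/(x_{ik}x_{jk},\ x_{ki}x_{kj}\mid k\in T, i\neq j)$, an $R$-bialgebra with comultiplication $\Delta(x_{ij})=\sum_k x_{ik}\otimes x_{kj}$ and counit $\varepsilon(x_{ij})=\delta_{ij}$; $\mathbb M_n=\mathbb M_{[n]}$ with $[n]=\{1,\dots,n\}$, and $\mathbb M_T\cong\mathbb M_{|T|}$. A $\hat G$-linear representation of $\mathbb M_n$ of dimension $d$ is an $R$-bialgebra homomorphism $\rho:R[\mathbb M_d]\to R[\mathbb M_n]$ such that for every $R$-algebra homomorphism $m:R[\mathbb M_n]\to R$ with $m(x_{ij})\in\hat G$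 for all $i,j$, one has $(m\circ\rho)(x_{kl})\in\hat G$ for all $k,l$. $G^n\rtimes S_n$ is the semidirect product with $S_n$ permuting the coordinates of $G^n$; $G^n\rtimes H$ is a normal subgroup. *)

theory Defs
  imports "HOL-Library.Poly_Mapping" "HOL-Algebra.Sym_Groups" "HOL-Algebra.Coset"
begin

(* Group ring R = Z[G], G written additively: the monoid algebra G \<Rightarrow>\<^sub>0 int (convolution product). *)
type_synonym 'g grpring = "'g \<Rightarrow>\<^sub>0 int"

(* Polynomial ring R[x_v | v] : monomials ('v \<Rightarrow>\<^sub>0 nat) with coefficients in R *)
type_synonym ('v,'g) mpol = "('v \<Rightarrow>\<^sub>0 nat) \<Rightarrow>\<^sub>0 'g grpring"

definition gelt :: "'g::comm_monoid_add \<Rightarrow> 'g grpring" where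
  "gelt g = Poly_Mapping.single g 1"

definition Ghat :: "'g::comm_monoid_add grpring set" where
  "Ghat = insert 0 (range gelt)"

definition PVar :: "'v \<Rightarrow> ('v,'g::comm_monoid_add) mpol" where
  "PVar v = Poly_Mapping.single (Poly_Mapping.single v 1) 1"

definition PConst :: "'g::comm_monoid_add grpring \<Rightarrow> ('v,'g) mpol" where
  "PConst r = Poly_Mapping.single 0 r"

definition peval :: "('c::zero \<Rightarrow> 'r::comm_ring_1) \<Rightarrow> ('v \<Rightarrow> 'r) \<Rightarrow> (('v \<Rightarrow>\<^sub>0 nat) \<Rightarrow>\<^sub>0 'c) \<Rightarrow> 'r" where
  "peval emb f p = (\<Sum>mo\<in>Poly_Mapping.keys p. emb (Poly_Mapping.lookup p mo) * (\<Prod>v\<in>Poly_Mapping.keys mo. f v ^ Poly_Mapping.lookup mo v))"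

definition polys :: "'v set \<Rightarrow> ('v,'g::comm_monoid_add) mpol set" where
  "polys V = {p. \<forall>m\<in>Poly_Mapping.keys p. Poly_Mapping.keys m \<subseteq> V}"

definition gen_ideal :: "'v set \<Rightarrow> ('v,'g::comm_monoid_add) mpol set \<Rightarrow> ('v,'g) mpol set" where
  "gen_ideal V S = {p. \<exists>F c. finite F \<and> F \<subseteq> S \<and> (\<forall>q\<in>F. c q \<in> polys V) \<and> p = (\<Sum>q\<in>F. c q * q)}"

(* defining relations x_ik x_jk, x_ki x_kj (i \<noteq> j) of R[M_T], variables renamed by e *)
definition Mrels_emb :: "('i \<times> 'i \<Rightarrow> 'v) \<Rightarrow> 'i set \<Rightarrow> ('v,'g::comm_monoid_add) mpol set" where
  "Mrels_emb e T =
     {PVar (e (i,k)) * PVar (e (j,k)) | i j k. i \<in> T \<and> j \<in> T \<and> k \<in> T \<and> i \<noteq> j} \<union>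
     {PVar (e (k,i)) * PVar (e (k,j)) | i j k. i \<in> T \<and> j \<in> T \<and> k \<in> T \<and> i \<noteq> j}"

abbreviation Mrels :: "'i set \<Rightarrow> ('i \<times> 'i,'g::comm_monoid_add) mpol set" where
  "Mrels T \<equiv> Mrels_emb id T"

(* ideal I_T with R[M_T] = R[x_ij | i,j\<in>T] / I_T *)
abbreviation Mideal :: "'i set \<Rightarrow> ('i \<times> 'i,'g::comm_monoid_add) mpol set" where
  "Mideal T \<equiv> gen_ideal (T \<times> T) (Mrels T)"

(* R[M_T] \<otimes>_R R[M_T] = R[x_ij (Inl), y_ij (Inr)] / (I_x + I_y) *)
definition Mideal2 :: "'i set \<Rightarrow> (('i \<times> 'i) + ('i \<times> 'i),'g::comm_monoid_add) mpol set" where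
  "Mideal2 T = gen_ideal (Inl ` (T \<times> T) \<union> Inr ` (T \<times> T)) (Mrels_emb Inl T \<union> Mrels_emb Inr T)"

definition comult :: "'i set \<Rightarrow> 'i \<times> 'i \<Rightarrow> (('i \<times> 'i) + ('i \<times> 'i),'g::comm_monoid_add) mpol" where
  "comult T v = (\<Sum>k\<in>T. PVar (Inl (fst v, k)) * PVar (Inr (k, snd v)))"

definition counit :: "'i \<times> 'i \<Rightarrow> 'g::comm_monoid_add grpring" where
  "counit v = (if fst v = snd v then 1 else 0)"

definition prename :: "('v \<Rightarrow> 'w) \<Rightarrow> ('v,'g::comm_monoid_add) mpol \<Rightarrow> ('w,'g) mpol" where
  "prename e p = peval PConst (\<lambda>v. PVar (e v)) p"

(* An R-algebra homomorphism R[M_T] \<rightarrow> R[M_S] is given by the images P(i,j) of the generators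
   x_ij (representatives in R[x_ij | i,j \<in> S]); it is an R-bialgebra homomorphism if: *)
definition bialg_hom :: "'a set \<Rightarrow> 'b set \<Rightarrow> ('a \<times> 'a \<Rightarrow> ('b \<times> 'b,'g::comm_monoid_add) mpol) \<Rightarrow> bool" where
  "bialg_hom T S P \<longleftrightarrow>
     (\<forall>v\<in>T \<times> T. P v \<in> polys (S \<times> S)) \<and>
     (\<forall>r\<in>Mrels T. peval PConst P r \<in> Mideal S) \<and>
     (\<forall>p\<in>polys (T \<times> T).
        peval PConst (comult S) (peval PConst P p)
        - peval PConst (\<lambda>w. case w of Inl v \<Rightarrow> prename Inl (P v) | Inr v \<Rightarrow> prename Inr (P v))
              (peval PConst (comult T) p) \<in> Mideal2 S) \<and>
     (\<forall>p\<in>polys (T \<times> T). peval id counit (peval PConst P p) = peval id counit p)"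

(* \<hat>G-linearity: every R-algebra hom m : R[M_S] \<rightarrow> R (given by values c on generators, killing
   the relations) with m(x_ij) \<in> \<hat>G satisfies (m \<circ> \<rho>)(x_kl) \<in> \<hat>G *)
definition Ghat_linear :: "'a set \<Rightarrow> 'b set \<Rightarrow> ('a \<times> 'a \<Rightarrow> ('b \<times> 'b,'g::comm_monoid_add) mpol) \<Rightarrow> bool" where
  "Ghat_linear T S P \<longleftrightarrow>
     (\<forall>c. (\<forall>v\<in>S \<times> S. c v \<in> Ghat) \<and> (\<forall>r\<in>Mrels S. peval id c r = 0)
          \<longrightarrow> (\<forall>v\<in>T \<times> T. peval id c (P v) \<in> Ghat))"

definition Ghat_rep :: "'a set \<Rightarrow> 'b set \<Rightarrow> ('a \<times> 'a \<Rightarrow> ('b \<times> 'b,'g::comm_monoid_add) mpol) \<Rightarrow> bool" where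
  "Ghat_rep T S P \<longleftrightarrow> bialg_hom T S P \<and> Ghat_linear T S P"

(* semidirect product G^n \<rtimes> S_n, G^n = extensional functions {1..n} \<rightarrow> G,
   (g,\<sigma>)(h,\<tau>) = (g + \<sigma>\<cdot>h, \<sigma>\<tau>) with (\<sigma>\<cdot>h)_k = h_{\<sigma>^-1 k} *)
definition wreath :: "nat \<Rightarrow> ((nat \<Rightarrow> 'g::ab_group_add) \<times> (nat \<Rightarrow> nat)) monoid" where
  "wreath n = \<lparr> carrier = ({1..n} \<rightarrow>\<^sub>E UNIV) \<times> {\<sigma>. \<sigma> permutes {1..n}},
     mult = (\<lambda>(g,\<sigma>) (h,\<tau>). (restrict (\<lambda>k. g k + h (Hilbert_Choice.inv \<sigma> k)) {1..n}, \<sigma> \<circ> \<tau>)),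
     one = (restrict (\<lambda>k. 0) {1..n}, id) \<rparr>"

definition wreath_sub :: "nat \<Rightarrow> (nat \<Rightarrow> nat) set \<Rightarrow> ((nat \<Rightarrow> 'g::ab_group_add) \<times> (nat \<Rightarrow> nat)) set" where
  "wreath_sub n H = ({1..n} \<rightarrow>\<^sub>E UNIV) \<times> H"

definition Pset :: "nat \<Rightarrow> ((nat \<Rightarrow> 'g::ab_group_add) \<times> (nat \<Rightarrow> nat)) set \<Rightarrow> (nat \<Rightarrow> nat) set" where
  "Pset n C = {\<sigma>. \<sigma> permutes {1..n} \<and> (\<forall>g\<in>{1..n} \<rightarrow>\<^sub>E UNIV. (g,\<sigma>) \<in> C)}"

definition xperm :: "nat \<Rightarrow> (nat \<Rightarrow> nat) \<Rightarrow> (nat \<times> nat,'g::comm_monoid_add) mpol" where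
  "xperm n \<sigma> = (\<Prod>k\<in>{1..n}. PVar (\<sigma> k, k))"

end

theory Submission
  imports Defs
begin

definition rhom :: "('c::comm_ring_1 \<Rightarrow> 'r::comm_ring_1) \<Rightarrow> bool" where
  "rhom e \<longleftrightarrow> e 0 = 0 \<and> e 1 = 1 \<and> (\<forall>x y. e (x + y) = e x + e y) \<and> (\<forall>x y. e (x * y) = e x * e y)"

definition mon :: "('v \<Rightarrow> 'r::comm_ring_1) \<Rightarrow> ('v \<Rightarrow>\<^sub>0 nat) \<Rightarrow> 'r" where
  "mon f m = (\<Prod>v\<in>Poly_Mapping.keys m. f v ^ Poly_Mapping.lookup m v)"

lemma peval_mon: "peval e f p = (\<Sum>mo\<in>Poly_Mapping.keys p. e (Poly_Mapping.lookup p mo) * mon f mo)"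
  by (simp add: peval_def mon_def)

lemma mon_superset:
  assumes "finite V" "Poly_Mapping.keys m \<subseteq> V"
  shows "mon f m = (\<Prod>v\<in>V. f v ^ Poly_Mapping.lookup m v)"
  unfolding mon_def using assms
  by (intro prod.mono_neutral_left) (auto simp: in_keys_iff)

lemma mon_add: "mon f (a + b) = mon f a * mon f b"
proof -
  let ?V = "Poly_Mapping.keys a \<union> Poly_Mapping.keys b"
  have "mon f (a + b) = (\<Prod>v\<in>?V. f v ^ Poly_Mapping.lookup (a+b) v)"
    by (rule mon_superset) (auto dest: set_mp[OF keys_add])
  also have "\<dots> = (\<Prod>v\<in>?V. f v ^ Poly_Mapping.lookup a v) * (\<Prod>v\<in>?V. f v ^ Poly_Mapping.lookup b v)"
    by (simp add: lookup_add power_add prod.distrib)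
  also have "\<dots> = mon f a * mon f b"
    by (simp add: mon_superset[symmetric])
  finally show ?thesis .
qed

lemma mon_zero [simp]: "mon f 0 = 1"
  by (simp add: mon_def)

lemma mon_single1 [simp]: "mon f (Poly_Mapping.single v 1) = f v"
  by (simp add: mon_def)

lemma rhomD:
  assumes "rhom e"
  shows "e 0 = 0" "e 1 = 1" "e (x + y) = e x + e y" "e (x * y) = e x * e y"
  using assms by (auto simp: rhom_def)

lemma rhom_minus: assumes "rhom e" shows "e (x - y) = e x - e y"
proof -
  have "e ((x - y) + y) = e (x - y) + e y" by (rule rhomD(3)[OF assms])
  then show ?thesis by simp
qed

lemma rhom_id: "rhom id" by (simp add: rhom_def)

lemma rhom_PConst: "rhom PConst"
  by (simp add: rhom_def PConst_def single_add mult_single)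

lemma peval_zero [simp]: "peval e f 0 = 0"
  by (simp add: peval_def)

lemma peval_single:
  assumes "rhom e"
  shows "peval e f (Poly_Mapping.single m c) = e c * mon f m"
  using assms by (simp add: peval_mon rhomD)

lemma peval_add:
  assumes "rhom e"
  shows "peval e f (p + q) = peval e f p + peval e f q"
  unfolding peval_mon
  by (rule setsum_keys_plus_distrib) (simp_all add: rhomD[OF assms] algebra_simps)

lemma peval_sum:
  assumes "rhom e"
  shows "peval e f (sum g A) = (\<Sum>a\<in>A. peval e f (g a))"
  by (induction A rule: infinite_finite_induct) (simp_all add: peval_add[OF assms])

lemma poly_expand: "p = (\<Sum>a\<in>Poly_Mapping.keys p. Poly_Mapping.single a (Poly_Mapping.lookup p a))"
proof (rule poly_mapping_eqI)
  fix k
  show "Poly_Mapping.lookup p k = Poly_Mapping.lookup (\<Sum>a\<in>Poly_Mapping.keys p. Poly_Mapping.single a (Poly_Mapping.lookup p a)) k"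
    by (simp add: lookup_sum lookup_single when_def in_keys_iff)
qed

lemma peval_mult:
  assumes "rhom e"
  shows "peval e f (p * q) = peval e f p * peval e f q"
proof -
  have "p * q = (\<Sum>a\<in>Poly_Mapping.keys p. \<Sum>b\<in>Poly_Mapping.keys q.
      Poly_Mapping.single (a + b) (Poly_Mapping.lookup p a * Poly_Mapping.lookup q b))"
    by (subst poly_expand[of p], subst poly_expand[of q]) (simp add: sum_product mult_single)
  then have "peval e f (p * q) = (\<Sum>a\<in>Poly_Mapping.keys p. \<Sum>b\<in>Poly_Mapping.keys q.
      e (Poly_Mapping.lookup p a) * mon f a * (e (Poly_Mapping.lookup q b) * mon f b))"
    by (simp add: peval_sum[OF assms] peval_single[OF assms] rhomD[OF assms] mon_add mult_ac)
  also have "\<dots> = peval e f p * peval e f q"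
    by (simp add: peval_mon sum_product)
  finally show ?thesis .
qed

lemma peval_one: "rhom e \<Longrightarrow> peval e f 1 = 1"
  using peval_single[of e f 0 1] by (simp add: rhomD)

lemma peval_prod:
  assumes "rhom e"
  shows "peval e f (prod g A) = (\<Prod>a\<in>A. peval e f (g a))"
  by (induction A rule: infinite_finite_induct) (simp_all add: peval_mult[OF assms] peval_one[OF assms])

lemma peval_power:
  assumes "rhom e"
  shows "peval e f (p ^ k) = peval e f p ^ k"
  by (induction k) (simp_all add: peval_mult[OF assms] peval_one[OF assms])

lemma peval_minus:
  assumes "rhom e"
  shows "peval e f (p - q) = peval e f p - peval e f q"
  using peval_add[OF assms, of f "p - q" q] by simp

lemma peval_PVar [simp]: "rhom e \<Longrightarrow> peval e f (PVar v) = f v"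
  by (simp add: PVar_def peval_single rhomD mon_def)

lemma peval_PConst [simp]: "rhom e \<Longrightarrow> peval e f (PConst c) = e c"
  by (simp add: PConst_def peval_single rhomD)

lemma peval_mon_hom:
  assumes "rhom e"
  shows "peval e g (mon f m) = mon (\<lambda>v. peval e g (f v)) m"
  by (simp add: mon_def peval_prod[OF assms] peval_power[OF assms])

lemma peval_comp:
  assumes "rhom e"
  shows "peval e g (peval PConst f p) = peval e (\<lambda>v. peval e g (f v)) p"
  by (simp add: peval_mon[of PConst] peval_mon[of e _ p] peval_sum[OF assms] peval_mult[OF assms]
      assms peval_mon_hom)

lemma peval_cong:
  assumes "p \<in> polys W" "\<And>v. v \<in> W \<Longrightarrow> f v = g v"
  shows "peval e f p = peval e g p"
proof -
  have "mon f m = mon g m" if "m \<in> Poly_Mapping.keys p" for m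
    unfolding mon_def using assms that unfolding polys_def by (intro prod.cong refl arg_cong[where f="\<lambda>x. x ^ _"]) blast
  then show ?thesis unfolding peval_mon by (intro sum.cong) auto
qed

lemma polys_zero [simp]: "0 \<in> polys V" by (simp add: polys_def)
lemma polys_one [simp]: "1 \<in> polys V" by (simp add: polys_def)
lemma polys_add: "p \<in> polys V \<Longrightarrow> q \<in> polys V \<Longrightarrow> p + q \<in> polys V"
proof (unfold polys_def, safe)
  fix m x assume p: "\<forall>m\<in>Poly_Mapping.keys p. Poly_Mapping.keys m \<subseteq> V"
    and q: "\<forall>m\<in>Poly_Mapping.keys q. Poly_Mapping.keys m \<subseteq> V"
    and m: "m \<in> Poly_Mapping.keys (p + q)" and x: "x \<in> Poly_Mapping.keys m"
  from m have "m \<in> Poly_Mapping.keys p \<union> Poly_Mapping.keys q" by (rule subsetD[OF keys_add])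
  with p q x show "x \<in> V" by blast
qed
lemma polys_uminus: "p \<in> polys V \<Longrightarrow> - p \<in> polys V"
  unfolding polys_def by (simp add: in_keys_iff)
lemma polys_diff: "p \<in> polys V \<Longrightarrow> q \<in> polys V \<Longrightarrow> p - q \<in> polys V"
  using polys_add[OF _ polys_uminus] by (metis diff_conv_add_uminus)
lemma polys_mult: "p \<in> polys V \<Longrightarrow> q \<in> polys V \<Longrightarrow> p * q \<in> polys V"
proof (unfold polys_def, safe)
  fix m x assume p: "\<forall>m\<in>Poly_Mapping.keys p. Poly_Mapping.keys m \<subseteq> V"
    and q: "\<forall>m\<in>Poly_Mapping.keys q. Poly_Mapping.keys m \<subseteq> V"
    and m: "m \<in> Poly_Mapping.keys (p * q)" and x: "x \<in> Poly_Mapping.keys m"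
  from m keys_mult obtain a b where "m = a + b" "a \<in> Poly_Mapping.keys p" "b \<in> Poly_Mapping.keys q" by blast
  moreover have "x \<in> Poly_Mapping.keys a \<union> Poly_Mapping.keys b" using x subsetD[OF keys_add[of a b]] \<open>m = a + b\<close> by simp
  ultimately show "x \<in> V" using p q by blast
qed
lemma polys_sum: "(\<And>a. a \<in> A \<Longrightarrow> f a \<in> polys V) \<Longrightarrow> sum f A \<in> polys V"
  by (induction A rule: infinite_finite_induct) (auto intro: polys_add)
lemma polys_prod: "(\<And>a. a \<in> A \<Longrightarrow> f a \<in> polys V) \<Longrightarrow> prod f A \<in> polys V"
  by (induction A rule: infinite_finite_induct) (auto intro: polys_mult)
lemma polys_power: "p \<in> polys V \<Longrightarrow> p ^ k \<in> polys V"
  by (induction k) (auto intro: polys_mult)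
lemma polys_PVar: "v \<in> V \<Longrightarrow> PVar v \<in> polys V"
  by (simp add: polys_def PVar_def)
lemma polys_PConst [simp]: "PConst c \<in> polys V"
  by (simp add: polys_def PConst_def)

lemma gi_zero [simp]: "0 \<in> gen_ideal V S"
  unfolding gen_ideal_def by (rule CollectI, rule exI[of _ "{}"]) simp

lemma gi_gen: "q \<in> S \<Longrightarrow> q \<in> gen_ideal V S"
  unfolding gen_ideal_def by (rule CollectI, rule exI[of _ "{q}"], rule exI[of _ "\<lambda>_. 1"]) simp

lemma gi_add:
  assumes "p \<in> gen_ideal V S" "q \<in> gen_ideal V S"
  shows "p + q \<in> gen_ideal V S"
proof -
  from assms(1) obtain F c where F: "finite F" "F \<subseteq> S" "\<forall>q\<in>F. c q \<in> polys V" "p = (\<Sum>q\<in>F. c q * q)"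
    unfolding gen_ideal_def by auto
  from assms(2) obtain F' c' where F': "finite F'" "F' \<subseteq> S" "\<forall>q\<in>F'. c' q \<in> polys V" "q = (\<Sum>q\<in>F'. c' q * q)"
    unfolding gen_ideal_def by auto
  define d where "d r = (if r \<in> F then c r else 0) + (if r \<in> F' then c' r else 0)" for r
  have "p = (\<Sum>r\<in>F \<union> F'. (if r \<in> F then c r else 0) * r)"
    unfolding F(4) by (rule sym, rule sum.mono_neutral_cong_right) (use F F' in auto)
  moreover have "q = (\<Sum>r\<in>F \<union> F'. (if r \<in> F' then c' r else 0) * r)"
    unfolding F'(4) by (rule sym, rule sum.mono_neutral_cong_right) (use F F' in auto)
  ultimately have "p + q = (\<Sum>r\<in>F \<union> F'. d r * r)"
    by (simp add: d_def distrib_right sum.distrib)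
  moreover have "\<forall>r\<in>F \<union> F'. d r \<in> polys V"
    using F F' by (auto simp: d_def intro!: polys_add)
  ultimately show ?thesis using F F' unfolding gen_ideal_def
    by (intro CollectI exI[of _ "F \<union> F'"] exI[of _ d]) auto
qed

lemma gi_mult:
  assumes "p \<in> gen_ideal V S" "r \<in> polys V"
  shows "r * p \<in> gen_ideal V S"
proof -
  from assms(1) obtain F c where F: "finite F" "F \<subseteq> S" "\<forall>q\<in>F. c q \<in> polys V" "p = (\<Sum>q\<in>F. c q * q)"
    unfolding gen_ideal_def by auto
  have "r * p = (\<Sum>q\<in>F. (r * c q) * q)" using F by (simp add: sum_distrib_left mult.assoc)
  moreover have "\<forall>q\<in>F. r * c q \<in> polys V" using F assms(2) by (auto intro: polys_mult)
  ultimately show ?thesis using F unfolding gen_ideal_def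
    by (intro CollectI exI[of _ F] exI[of _ "\<lambda>q. r * c q"]) auto
qed

lemma gi_mult2: "p \<in> gen_ideal V S \<Longrightarrow> r \<in> polys V \<Longrightarrow> p * r \<in> gen_ideal V S"
  using gi_mult by (metis mult.commute)

lemma gi_uminus: assumes "p \<in> gen_ideal V S" shows "- p \<in> gen_ideal V S"
proof -
  have "- 1 \<in> polys V" by (rule polys_uminus[OF polys_one])
  from gi_mult[OF assms this] show ?thesis by simp
qed

lemma gi_diff: "p \<in> gen_ideal V S \<Longrightarrow> q \<in> gen_ideal V S \<Longrightarrow> p - q \<in> gen_ideal V S"
  using gi_add[OF _ gi_uminus] by (metis diff_conv_add_uminus)

lemma gi_sum: "(\<And>a. a \<in> A \<Longrightarrow> f a \<in> gen_ideal V S) \<Longrightarrow> sum f A \<in> gen_ideal V S"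
  by (induction A rule: infinite_finite_induct) (auto intro: gi_add)

lemma gi_cong_mult:
  assumes "a - a' \<in> gen_ideal V S" "b - b' \<in> gen_ideal V S" "a' \<in> polys V" "b \<in> polys V"
  shows "a * b - a' * b' \<in> gen_ideal V S"
proof -
  have "a * b - a' * b' = (a - a') * b + a' * (b - b')" by (simp add: algebra_simps)
  then show ?thesis using assms gi_add gi_mult gi_mult2 by metis
qed

lemma gi_cong_prod:
  assumes "\<And>x. x \<in> A \<Longrightarrow> u x - w x \<in> gen_ideal V S" "\<And>x. x \<in> A \<Longrightarrow> u x \<in> polys V"
    "\<And>x. x \<in> A \<Longrightarrow> w x \<in> polys V"
  shows "prod u A - prod w A \<in> gen_ideal V S"
  using assms
proof (induction A rule: infinite_finite_induct)
  case (insert x F)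
  then show ?case by (simp, intro gi_cong_mult) (auto intro: polys_prod)
qed auto

lemma gi_cong_power:
  assumes "u - w \<in> gen_ideal V S" "u \<in> polys V" "w \<in> polys V"
  shows "u ^ k - w ^ k \<in> gen_ideal V S"
  using gi_cong_prod[of "{..<k}" "\<lambda>_. u" "\<lambda>_. w"] assms by simp

lemma gi_cong_peval:
  assumes "p \<in> polys W" "\<And>v. v \<in> W \<Longrightarrow> f1 v - f2 v \<in> gen_ideal V S"
    "\<And>v. v \<in> W \<Longrightarrow> f1 v \<in> polys V" "\<And>v. v \<in> W \<Longrightarrow> f2 v \<in> polys V"
  shows "peval PConst f1 p - peval PConst f2 p \<in> gen_ideal V S"
proof -
  have m: "mon f1 m - mon f2 m \<in> gen_ideal V S" if "m \<in> Poly_Mapping.keys p" for m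
    unfolding mon_def
  proof (rule gi_cong_prod)
    fix x assume "x \<in> Poly_Mapping.keys m"
    then have "x \<in> W" using assms(1) that unfolding polys_def by blast
    then show "f1 x ^ Poly_Mapping.lookup m x - f2 x ^ Poly_Mapping.lookup m x \<in> gen_ideal V S"
      "f1 x ^ Poly_Mapping.lookup m x \<in> polys V" "f2 x ^ Poly_Mapping.lookup m x \<in> polys V"
      using assms by (auto intro: gi_cong_power polys_power)
  qed
  have "peval PConst f1 p - peval PConst f2 p =
      (\<Sum>m\<in>Poly_Mapping.keys p. PConst (Poly_Mapping.lookup p m) * (mon f1 m - mon f2 m))"
    by (simp add: peval_mon algebra_simps sum_subtractf)
  also have "\<dots> \<in> gen_ideal V S"
    by (intro gi_sum gi_mult m polys_PConst)
  finally show ?thesis .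
qed

lemma perm_diff_point:
  assumes "\<sigma> permutes S" "\<tau> permutes S" "\<sigma> \<noteq> \<tau>"
  shows "\<exists>k\<in>S. \<sigma> k \<noteq> \<tau> k"
proof (rule ccontr)
  assume "\<not> ?thesis"
  then have "\<sigma> x = \<tau> x" for x
    using assms(1,2) by (cases "x \<in> S") (auto simp: permutes_not_in)
  then show False using assms(3) by auto
qed

lemma perm_in: "\<sigma> permutes S \<Longrightarrow> a \<in> S \<Longrightarrow> \<sigma> a \<in> S"
  by (simp add: permutes_in_image)

lemma perm_ge1 [simp]: "\<sigma> permutes {Suc 0..n} \<Longrightarrow> Suc 0 \<le> a \<Longrightarrow> a \<le> n \<Longrightarrow> Suc 0 \<le> \<sigma> a"
  using perm_in[of \<sigma> "{Suc 0..n}" a] by auto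

lemma perm_len [simp]: "\<sigma> permutes {Suc 0..n} \<Longrightarrow> Suc 0 \<le> a \<Longrightarrow> a \<le> n \<Longrightarrow> \<sigma> a \<le> n"
  using perm_in[of \<sigma> "{Suc 0..n}" a] by auto

lemma xperm_remove:
  assumes "k \<in> {1..n}"
  shows "xperm n \<sigma> = PVar (\<sigma> k, k) * (\<Prod>m\<in>{1..n} - {k}. PVar (\<sigma> m, m))"
  unfolding xperm_def using assms by (simp add: prod.remove)

lemma polys_xperm:
  assumes "\<sigma> permutes {1..n}"
  shows "xperm n \<sigma> \<in> polys ({1..n} \<times> {1..n})"
  unfolding xperm_def using assms
  by (intro polys_prod polys_PVar) (blast intro: permutes_in_image[OF assms, THEN iffD2])

lemma xperm_mult_ideal:
  assumes "\<sigma> permutes {1..n}" "\<tau> permutes {1..n}" "\<sigma> \<noteq> \<tau>"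
  shows "(xperm n \<sigma> * xperm n \<tau> :: (nat \<times> nat, 'g::comm_monoid_add) mpol) \<in> Mideal {1..n}"
proof -
  obtain k where k: "k \<in> {1..n}" "\<sigma> k \<noteq> \<tau> k" using perm_diff_point[OF assms] by blast
  let ?rs = "(\<Prod>m\<in>{1..n} - {k}. PVar (\<sigma> m, m)) :: (nat \<times> nat, 'g) mpol"
  let ?rt = "(\<Prod>m\<in>{1..n} - {k}. PVar (\<tau> m, m)) :: (nat \<times> nat, 'g) mpol"
  have eq: "xperm n \<sigma> * xperm n \<tau> = (PVar (\<sigma> k, k) * PVar (\<tau> k, k)) * (?rs * ?rt)"
    by (simp only: xperm_remove[OF k(1), of \<sigma>] xperm_remove[OF k(1), of \<tau>] mult_ac)
  have sk: "\<sigma> k \<in> {1..n}" "\<tau> k \<in> {1..n}" using perm_in[OF assms(1) k(1)] perm_in[OF assms(2) k(1)] by auto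
  have "PVar (\<sigma> k, k) * PVar (\<tau> k, k) \<in> (Mrels {1..n} :: (nat \<times> nat, 'g) mpol set)"
    unfolding Mrels_emb_def
    by (rule UnI1, rule CollectI, rule exI[of _ "\<sigma> k"], rule exI[of _ "\<tau> k"], rule exI[of _ k]) (use sk k in auto)
  moreover have "?rs * ?rt \<in> polys ({1..n} \<times> {1..n})"
    using assms by (intro polys_mult polys_prod polys_PVar) (auto simp: permutes_in_image)
  ultimately show ?thesis unfolding eq by (intro gi_mult2 gi_gen)
qed

definition XL :: "nat set \<Rightarrow> (nat \<Rightarrow> nat) \<Rightarrow> ((nat \<times> nat) + (nat \<times> nat), 'g::comm_monoid_add) mpol" where
  "XL S \<rho> = (\<Prod>k\<in>S. PVar (Inl (\<rho> k, k)))"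

definition XR :: "nat set \<Rightarrow> (nat \<Rightarrow> nat) \<Rightarrow> ((nat \<times> nat) + (nat \<times> nat), 'g::comm_monoid_add) mpol" where
  "XR S \<rho> = (\<Prod>k\<in>S. PVar (Inr (\<rho> k, k)))"

lemma restrict_perm_bij:
  assumes "finite S"
  shows "bij_betw (\<lambda>\<tau>. restrict \<tau> S) {\<tau>. \<tau> permutes S} {f\<in>S \<rightarrow>\<^sub>E S. inj_on f S}"
  unfolding bij_betw_def
proof (intro conjI)
  show "inj_on (\<lambda>\<tau>. restrict \<tau> S) {\<tau>. \<tau> permutes S}"
  proof (rule inj_onI)
    fix t1 t2 assume t: "t1 \<in> {\<tau>. \<tau> permutes S}" "t2 \<in> {\<tau>. \<tau> permutes S}" and eq: "restrict t1 S = restrict t2 S"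
    show "t1 = t2"
    proof
      fix x show "t1 x = t2 x"
      proof (cases "x \<in> S")
        case True then show ?thesis using fun_cong[OF eq, of x] by simp
      next
        case False then show ?thesis using t by (simp add: permutes_not_in)
      qed
    qed
  qed
  show "(\<lambda>\<tau>. restrict \<tau> S) ` {\<tau>. \<tau> permutes S} = {f \<in> S \<rightarrow>\<^sub>E S. inj_on f S}"
  proof (intro equalityI subsetI)
    fix f assume "f \<in> (\<lambda>\<tau>. restrict \<tau> S) ` {\<tau>. \<tau> permutes S}"
    then obtain t where t: "t permutes S" "f = restrict t S" by blast
    have "f \<in> S \<rightarrow>\<^sub>E S" using t by (auto simp: permutes_in_image)
    moreover have "inj_on f S" using t permutes_inj_on[OF t(1)] by (simp add: inj_on_def)
    ultimately show "f \<in> {f \<in> S \<rightarrow>\<^sub>E S. inj_on f S}" by blast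
  next
    fix f assume f: "f \<in> {f \<in> S \<rightarrow>\<^sub>E S. inj_on f S}"
    define t where "t x = (if x \<in> S then f x else x)" for x
    have fS: "f ` S \<subseteq> S" and inj: "inj_on f S" using f by auto
    have "f ` S = S" using endo_inj_surj[OF assms fS inj] .
    then have "t ` S = S" by (auto simp: t_def image_def)
    moreover have "inj_on t S" using inj by (auto simp: t_def inj_on_def)
    ultimately have "bij_betw t S S" by (simp add: bij_betw_def)
    then have tp: "t permutes S" by (rule bij_imp_permutes) (simp add: t_def)
    have "restrict t S = f" using f by (auto simp: t_def fun_eq_iff PiE_def extensional_def)
    with tp show "f \<in> (\<lambda>\<tau>. restrict \<tau> S) ` {\<tau>. \<tau> permutes S}" by blast
  qed
qed

lemma Mideal2_alt: "Mideal2 S = gen_ideal (Inl ` (S \<times> S) \<union> Inr ` (S \<times> S)) (Mrels_emb Inl S \<union> Mrels_emb Inr S)"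
  by (simp add: Mideal2_def)

lemma comult_eq: "comult S (i, k) = (\<Sum>j\<in>S. PVar (Inl (i, j)) * PVar (Inr (j, k)))"
  by (simp add: comult_def)

lemma key_comult:
  assumes fin: "finite S" and sp: "\<sigma> permutes S"
  shows "(\<Prod>k\<in>S. comult S (\<sigma> k, k)) - (\<Sum>\<tau>\<in>{\<tau>. \<tau> permutes S}. XL S (\<sigma> \<circ> inv' \<tau>) * XR S \<tau>)
     \<in> (Mideal2 S :: ((nat \<times> nat) + (nat \<times> nat), 'g::comm_monoid_add) mpol set)"
proof -
  let ?V = "Inl ` (S \<times> S) \<union> Inr ` (S \<times> S)"
  define F :: "(nat \<Rightarrow> nat) \<Rightarrow> ((nat \<times> nat) + (nat \<times> nat), 'g) mpol"
    where "F f = (\<Prod>k\<in>S. PVar (Inl (\<sigma> k, f k)) * PVar (Inr (f k, k)))" for f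
  define J where "J = {f\<in>S \<rightarrow>\<^sub>E S. inj_on f S}"
  have finPi: "finite (S \<rightarrow>\<^sub>E S)" using fin by (simp add: finite_PiE)
  have JS: "J \<subseteq> S \<rightarrow>\<^sub>E S" by (auto simp: J_def)
  have 1: "(\<Prod>k\<in>S. comult S (\<sigma> k, k)) = (\<Sum>f\<in>S \<rightarrow>\<^sub>E S. F f)"
    unfolding comult_eq F_def by (rule prod_sum_PiE) (use fin in auto)
  have 2: "(\<Sum>f\<in>S \<rightarrow>\<^sub>E S. F f) = (\<Sum>f\<in>(S \<rightarrow>\<^sub>E S) - J. F f) + (\<Sum>f\<in>J. F f)"
    by (rule sum.subset_diff[OF JS finPi])
  have 3: "(\<Sum>f\<in>J. F f) = (\<Sum>\<tau>\<in>{\<tau>. \<tau> permutes S}. XL S (\<sigma> \<circ> inv' \<tau>) * XR S \<tau>)"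
  proof -
    have "(\<Sum>f\<in>J. F f) = (\<Sum>\<tau>\<in>{\<tau>. \<tau> permutes S}. F (restrict \<tau> S))"
      unfolding J_def by (rule sum.reindex_bij_betw[symmetric, OF restrict_perm_bij[OF fin]])
    also have "\<dots> = (\<Sum>\<tau>\<in>{\<tau>. \<tau> permutes S}. XL S (\<sigma> \<circ> inv' \<tau>) * XR S \<tau>)"
    proof (rule sum.cong[OF refl])
      fix \<tau> assume "\<tau> \<in> {\<tau>. \<tau> permutes S}"
      then have tp: "\<tau> permutes S" by simp
      have "F (restrict \<tau> S) = (\<Prod>k\<in>S. PVar (Inl (\<sigma> k, \<tau> k))) * XR S \<tau>"
        unfolding F_def XR_def by (simp add: prod.distrib)
      moreover have "(\<Prod>k\<in>S. PVar (Inl (\<sigma> k, \<tau> k))) = (XL S (\<sigma> \<circ> inv' \<tau>) :: (_, 'g) mpol)"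
      proof -
        have "XL S (\<sigma> \<circ> inv' \<tau>) = (\<Prod>k\<in>S. PVar (Inl (\<sigma> (inv' \<tau> (\<tau> k)), \<tau> k)))"
          unfolding XL_def comp_def
          by (rule prod.reindex_bij_betw[symmetric, OF permutes_imp_bij[OF tp]])
        also have "\<dots> = (\<Prod>k\<in>S. PVar (Inl (\<sigma> k, \<tau> k)))"
          by (simp add: permutes_inverses(2)[OF tp])
        finally show ?thesis by (rule sym)
      qed
      ultimately show "F (restrict \<tau> S) = XL S (\<sigma> \<circ> inv' \<tau>) * XR S \<tau>" by simp
    qed
    finally show ?thesis .
  qed
  have 4: "(\<Sum>f\<in>(S \<rightarrow>\<^sub>E S) - J. F f) \<in> gen_ideal ?V (Mrels_emb Inl S \<union> Mrels_emb Inr S)"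
  proof (rule gi_sum)
    fix f assume "f \<in> (S \<rightarrow>\<^sub>E S) - J"
    then have fP: "f \<in> S \<rightarrow>\<^sub>E S" and ninj: "\<not> inj_on f S" by (auto simp: J_def)
    then obtain k1 k2 where k: "k1 \<in> S" "k2 \<in> S" "k1 \<noteq> k2" "f k1 = f k2"
      unfolding inj_on_def by blast
    have fk: "f k1 \<in> S" using fP k(1) by auto
    let ?L = "\<lambda>k. PVar (Inl (\<sigma> k, f k)) :: ((nat \<times> nat) + (nat \<times> nat), 'g) mpol"
    let ?R = "\<lambda>k. PVar (Inr (f k, k)) :: ((nat \<times> nat) + (nat \<times> nat), 'g) mpol"
    have "F f = prod ?L S * prod ?R S" unfolding F_def by (simp add: prod.distrib)
    also have "prod ?R S = ?R k1 * (?R k2 * prod ?R (S - {k1} - {k2}))"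
      using k fin by (simp add: prod.remove[of S k1] prod.remove[of "S - {k1}" k2])
    finally have eq: "F f = (?R k1 * ?R k2) * (prod ?L S * prod ?R (S - {k1} - {k2}))"
      by (simp add: mult_ac)
    have "?R k1 * ?R k2 \<in> Mrels_emb Inr S"
      unfolding Mrels_emb_def
      by (rule UnI2, rule CollectI, rule exI[of _ k1], rule exI[of _ k2], rule exI[of _ "f k1"])
         (use k fk in auto)
    moreover have "prod ?L S * prod ?R (S - {k1} - {k2}) \<in> polys ?V"
      using fP sp by (intro polys_mult polys_prod polys_PVar) (auto simp: permutes_in_image)
    ultimately show "F f \<in> gen_ideal ?V (Mrels_emb Inl S \<union> Mrels_emb Inr S)"
      unfolding eq by (intro gi_mult2 gi_gen) auto
  qed
  show ?thesis using 4 unfolding 1 2 3 Mideal2_alt by simp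
qed

definition Pm :: "nat \<Rightarrow> ('a \<times> 'a \<Rightarrow> (nat \<Rightarrow> nat) set) \<Rightarrow> 'a \<times> 'a \<Rightarrow> (nat \<times> nat, 'g::comm_monoid_add) mpol" where
  "Pm n Q v = (\<Sum>\<sigma>\<in>Q v. xperm n \<sigma>)"

lemma gelt_mult: "gelt g * gelt h = gelt (g + h)"
  by (simp add: gelt_def mult_single)

lemma gelt_nz: "gelt g \<noteq> 0"
  by (simp add: gelt_def)

lemma Ghat_one: "(1 :: 'g::comm_monoid_add grpring) \<in> Ghat"
proof -
  have "(1 :: 'g grpring) = gelt 0" by (simp add: gelt_def)
  then show ?thesis by (simp add: Ghat_def)
qed

lemma Ghat_mult: "x \<in> Ghat \<Longrightarrow> y \<in> Ghat \<Longrightarrow> x * y \<in> Ghat"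
  by (auto simp: Ghat_def gelt_mult)

lemma Ghat_prod: "(\<And>a. a \<in> A \<Longrightarrow> f a \<in> Ghat) \<Longrightarrow> prod f A \<in> Ghat"
  by (induction A rule: infinite_finite_induct) (auto intro: Ghat_mult simp: Ghat_one)

lemma Ghat_zdiv: "x \<in> Ghat \<Longrightarrow> y \<in> Ghat \<Longrightarrow> x * y = 0 \<Longrightarrow> x = 0 \<or> y = 0"
  by (auto simp: Ghat_def gelt_mult gelt_nz)

lemma perm_id_point:
  assumes "\<sigma> permutes S" "\<sigma> \<noteq> id"
  shows "\<exists>k\<in>S. \<sigma> k \<noteq> k"
  using perm_diff_point[OF assms(1) permutes_id assms(2)] by simp

lemma finite_perms: "finite {\<sigma>. \<sigma> permutes {1..(n::nat)}}"
  by (rule finite_permutations) simp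

lemma L_polys:
  assumes "Q v \<subseteq> {\<sigma>. \<sigma> permutes {1..n}}"
  shows "Pm n Q v \<in> polys ({1..n} \<times> {1..n})"
  unfolding Pm_def using assms by (intro polys_sum polys_xperm) auto

lemma L_rels:
  assumes Qp: "\<And>A B. A \<in> T \<Longrightarrow> B \<in> T \<Longrightarrow> Q (A,B) \<subseteq> {\<sigma>. \<sigma> permutes {1..n}}"
  and b1: "\<And>A B C. A \<in> T \<Longrightarrow> B \<in> T \<Longrightarrow> C \<in> T \<Longrightarrow> A \<noteq> B \<Longrightarrow> Q (A,C) \<inter> Q (B,C) = {}"
  and b2: "\<And>A B C. A \<in> T \<Longrightarrow> B \<in> T \<Longrightarrow> C \<in> T \<Longrightarrow> A \<noteq> B \<Longrightarrow> Q (C,A) \<inter> Q (C,B) = {}"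
  and r: "r \<in> Mrels T"
  shows "peval PConst (Pm n Q :: _ \<Rightarrow> (nat \<times> nat, 'g::comm_monoid_add) mpol) r \<in> Mideal {1..n}"
proof -
  have main: "Pm n Q v * Pm n Q w \<in> (Mideal {1..n} :: (nat \<times> nat, 'g) mpol set)"
    if "Q v \<inter> Q w = {}" "Q v \<subseteq> {\<sigma>. \<sigma> permutes {1..n}}" "Q w \<subseteq> {\<sigma>. \<sigma> permutes {1..n}}" for v w
  proof -
    have "Pm n Q v * Pm n Q w = (\<Sum>\<sigma>\<in>Q v. \<Sum>\<tau>\<in>Q w. (xperm n \<sigma> * xperm n \<tau> :: (nat \<times> nat, 'g) mpol))"
      unfolding Pm_def by (rule sum_product)
    also have "\<dots> \<in> Mideal {1..n}"
    proof (intro gi_sum)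
      fix \<sigma> \<tau> assume "\<sigma> \<in> Q v" "\<tau> \<in> Q w"
      then show "(xperm n \<sigma> * xperm n \<tau> :: (nat \<times> nat, 'g) mpol) \<in> Mideal {1..n}"
        using that by (intro xperm_mult_ideal) auto
    qed
    finally show ?thesis .
  qed
  from r consider (a) i j k where "r = PVar (i,k) * PVar (j,k)" "i \<in> T" "j \<in> T" "k \<in> T" "i \<noteq> j"
    | (b) i j k where "r = PVar (k,i) * PVar (k,j)" "i \<in> T" "j \<in> T" "k \<in> T" "i \<noteq> j"
    unfolding Mrels_emb_def by auto
  then show ?thesis
  proof cases
    case a
    then show ?thesis using main[of "(i,k)" "(j,k)"] b1[of i j k] Qp
      by (simp add: peval_mult[OF rhom_PConst] rhom_PConst)
  next
    case b
    then show ?thesis using main[of "(k,i)" "(k,j)"] b2[of i j k] Qp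
      by (simp add: peval_mult[OF rhom_PConst] rhom_PConst)
  qed
qed

lemma peval_Pm:
  assumes "rhom e"
  shows "peval e f (Pm n Q v) = (\<Sum>\<sigma>\<in>Q v. \<Prod>k\<in>{1..n}. f (\<sigma> k, k))"
  by (simp add: Pm_def xperm_def peval_sum[OF assms] peval_prod[OF assms] assms)

lemma L_ghat:
  assumes Qp: "\<And>A B. A \<in> T \<Longrightarrow> B \<in> T \<Longrightarrow> Q (A,B) \<subseteq> {\<sigma>. \<sigma> permutes {1..n}}"
  shows "Ghat_linear T {1..n} (Pm n Q :: _ \<Rightarrow> (nat \<times> nat, 'g::comm_monoid_add) mpol)"
  unfolding Ghat_linear_def
proof (intro allI impI ballI, elim conjE)
  fix c :: "nat \<times> nat \<Rightarrow> 'g grpring" and v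
  assume H: "\<forall>v\<in>{1..n} \<times> {1..n}. c v \<in> Ghat" and R: "\<forall>r\<in>Mrels {1..n}. peval id c r = 0"
    and v: "v \<in> T \<times> T"
  have Qv: "Q v \<subseteq> {\<sigma>. \<sigma> permutes {1..n}}" using v Qp by auto
  have rel: "c (i,k) = 0 \<or> c (j,k) = 0" if "i \<in> {1..n}" "j \<in> {1..n}" "k \<in> {1..n}" "i \<noteq> j" for i j k
  proof -
    have "PVar (i,k) * PVar (j,k) \<in> (Mrels {1..n} :: (nat \<times> nat, 'g) mpol set)"
      unfolding Mrels_emb_def
      by (rule UnI1, rule CollectI, rule exI[of _ i], rule exI[of _ j], rule exI[of _ k]) (use that in auto)
    then have "c (i,k) * c (j,k) = 0"
      using R by (auto simp: peval_mult[OF rhom_id] rhom_id)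
    then show ?thesis using H that Ghat_zdiv by blast
  qed
  define t where "t \<sigma> = (\<Prod>k\<in>{1..n}. c (\<sigma> k, k))" for \<sigma>
  have val: "peval id c (Pm n Q v) = (\<Sum>\<sigma>\<in>Q v. t \<sigma>)"
    by (simp add: peval_Pm rhom_id t_def)
  have tG: "t \<sigma> \<in> Ghat" if "\<sigma> permutes {1..n}" for \<sigma>
    unfolding t_def by (intro Ghat_prod) (use H that perm_in in auto)
  have zero: "t \<sigma> = 0" if "\<sigma> permutes {1..n}" "\<exists>k\<in>{1..n}. c (\<sigma> k, k) = 0" for \<sigma>
    using that unfolding t_def by (metis finite_atLeastAtMost prod_zero)
  show "peval id c (Pm n Q v) \<in> Ghat"
  proof (cases "\<exists>\<sigma>0\<in>Q v. \<forall>k\<in>{1..n}. c (\<sigma>0 k, k) \<noteq> 0")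
    case True
    then obtain \<sigma>0 where s0: "\<sigma>0 \<in> Q v" "\<forall>k\<in>{1..n}. c (\<sigma>0 k, k) \<noteq> 0" by blast
    have "(\<Sum>\<sigma>\<in>Q v. t \<sigma>) = (\<Sum>\<sigma>\<in>Q v. if \<sigma> = \<sigma>0 then t \<sigma>0 else 0)"
    proof (rule sum.cong[OF refl])
      fix \<sigma> assume s: "\<sigma> \<in> Q v"
      show "t \<sigma> = (if \<sigma> = \<sigma>0 then t \<sigma>0 else 0)"
      proof (cases "\<sigma> = \<sigma>0")
        case False
        have sp: "\<sigma> permutes {1..n}" "\<sigma>0 permutes {1..n}" using s s0 Qv by auto
        obtain k where k: "k \<in> {1..n}" "\<sigma>0 k \<noteq> \<sigma> k" using perm_diff_point[OF sp(2) sp(1)] False by metis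
        have "c (\<sigma> k, k) = 0" using rel[of "\<sigma>0 k" "\<sigma> k" k] k s0 perm_in[OF sp(1) k(1)] perm_in[OF sp(2) k(1)] by auto
        then have "t \<sigma> = 0" using k(1) by (intro zero[OF sp(1)]) blast
        then show ?thesis using False by simp
      qed simp
    qed
    also have "\<dots> = t \<sigma>0" using s0 Qv finite_subset[OF Qv finite_perms] by simp
    finally show ?thesis using val tG s0 Qv by auto
  next
    case False
    then have "(\<Sum>\<sigma>\<in>Q v. t \<sigma>) = 0" using zero Qv by (intro sum.neutral) auto
    then show ?thesis using val by (simp add: Ghat_def)
  qed
qed

lemma L_counit:
  assumes Qp: "\<And>A B. A \<in> T \<Longrightarrow> B \<in> T \<Longrightarrow> Q (A,B) \<subseteq> {\<sigma>. \<sigma> permutes {1..n}}"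
  and c: "\<And>A B. A \<in> T \<Longrightarrow> B \<in> T \<Longrightarrow> (id \<in> Q (A,B)) = (A = B)"
  and p: "p \<in> polys (T \<times> T)"
  shows "peval id counit (peval PConst (Pm n Q :: _ \<Rightarrow> (nat \<times> nat, 'g::comm_monoid_add) mpol) p) = peval id counit p"
proof -
  have "peval id counit (peval PConst (Pm n Q :: _ \<Rightarrow> (nat \<times> nat, 'g) mpol) p) =
      peval id (\<lambda>v. peval id counit (Pm n Q v :: (nat \<times> nat, 'g) mpol)) p"
    by (rule peval_comp[OF rhom_id])
  also have "\<dots> = peval id counit p"
  proof (rule peval_cong[OF p])
    fix v assume v: "v \<in> T \<times> T"
    then obtain A B where AB: "v = (A,B)" "A \<in> T" "B \<in> T" by auto
    have Qv: "Q v \<subseteq> {\<sigma>. \<sigma> permutes {1..n}}" using AB Qp by auto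
    have "peval id counit (Pm n Q v :: (nat \<times> nat, 'g) mpol) = (\<Sum>\<sigma>\<in>Q v. \<Prod>k\<in>{1..n}. counit (\<sigma> k, k))"
      by (simp add: peval_Pm rhom_id)
    also have "\<dots> = (\<Sum>\<sigma>\<in>Q v. if \<sigma> = id then 1 else 0)"
    proof (rule sum.cong[OF refl])
      fix \<sigma> assume "\<sigma> \<in> Q v"
      then have sp: "\<sigma> permutes {1..n}" using Qv by auto
      show "(\<Prod>k\<in>{1..n}. counit (\<sigma> k, k)) = (if \<sigma> = id then 1 else (0::'g grpring))"
      proof (cases "\<sigma> = id")
        case False
        then obtain k where "k \<in> {1..n}" "\<sigma> k \<noteq> k" using perm_id_point[OF sp] by blast
        then show ?thesis using False by (intro trans[OF prod_zero]) (auto simp: counit_def)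
      qed (simp add: counit_def)
    qed
    also have "\<dots> = (if id \<in> Q v then 1 else 0)"
      using finite_subset[OF Qv finite_perms] by (simp add: sum.delta')
    also have "\<dots> = counit v" using c AB by (simp add: counit_def)
    finally show "peval id counit (Pm n Q v :: (nat \<times> nat, 'g) mpol) = counit v" .
  qed
  finally show ?thesis .
qed

lemma sum_sub_if: "finite A \<Longrightarrow> B \<subseteq> A \<Longrightarrow> sum f B = sum (\<lambda>x. if x \<in> B then f x else 0) A"
  by (simp add: sum.inter_restrict[symmetric] Int_absorb1)

lemma polys_XL: "\<rho> permutes S \<Longrightarrow> XL S \<rho> \<in> polys (Inl ` (S \<times> S) \<union> Inr ` (S \<times> S))"
  unfolding XL_def by (intro polys_prod polys_PVar) (auto simp: permutes_in_image)

lemma polys_XR: "\<rho> permutes S \<Longrightarrow> XR S \<rho> \<in> polys (Inl ` (S \<times> S) \<union> Inr ` (S \<times> S))"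
  unfolding XR_def by (intro polys_prod polys_PVar) (auto simp: permutes_in_image)

lemma polys_comult: "i \<in> S \<Longrightarrow> k \<in> S \<Longrightarrow> comult S (i,k) \<in> polys (Inl ` (S \<times> S) \<union> Inr ` (S \<times> S))"
  unfolding comult_eq by (intro polys_sum polys_mult polys_PVar) auto

lemma reindex_step:
  assumes tp: "\<tau> permutes S" and Qp: "Q \<subseteq> {\<sigma>. \<sigma> permutes S}" and finS: "finite S"
  shows "(\<Sum>\<sigma>\<in>Q. h (\<sigma> \<circ> inv' \<tau>)) = (\<Sum>\<rho>\<in>{\<rho>. \<rho> permutes S}. if \<rho> \<circ> \<tau> \<in> Q then h \<rho> else (0::'b::comm_monoid_add))"
proof -
  have bij: "bij_betw (\<lambda>\<sigma>. \<sigma> \<circ> inv' \<tau>) Q {\<rho> \<in> {\<rho>. \<rho> permutes S}. \<rho> \<circ> \<tau> \<in> Q}"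
  proof (rule bij_betw_byWitness[where f'="\<lambda>\<rho>. \<rho> \<circ> \<tau>"])
    show "\<forall>a\<in>Q. a \<circ> inv' \<tau> \<circ> \<tau> = a" by (simp add: o_assoc[symmetric] permutes_inv_o(2)[OF tp])
    show "\<forall>a\<in>{\<rho> \<in> {\<rho>. \<rho> permutes S}. \<rho> \<circ> \<tau> \<in> Q}. a \<circ> \<tau> \<circ> inv' \<tau> = a"
      by (simp add: o_assoc[symmetric] permutes_inv_o(1)[OF tp])
    show "(\<lambda>\<sigma>. \<sigma> \<circ> inv' \<tau>) ` Q \<subseteq> {\<rho> \<in> {\<rho>. \<rho> permutes S}. \<rho> \<circ> \<tau> \<in> Q}"
      using Qp by (auto simp: o_assoc[symmetric] permutes_inv_o(2)[OF tp] intro!: permutes_compose[OF permutes_inv[OF tp]])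
    show "(\<lambda>\<rho>. \<rho> \<circ> \<tau>) ` {\<rho> \<in> {\<rho>. \<rho> permutes S}. \<rho> \<circ> \<tau> \<in> Q} \<subseteq> Q" by auto
  qed
  have "(\<Sum>\<sigma>\<in>Q. h (\<sigma> \<circ> inv' \<tau>)) = (\<Sum>\<rho>\<in>{\<rho> \<in> {\<rho>. \<rho> permutes S}. \<rho> \<circ> \<tau> \<in> Q}. h \<rho>)"
    by (rule sum.reindex_bij_betw[OF bij])
  also have "\<dots> = (\<Sum>\<rho>\<in>{\<rho>. \<rho> permutes S}. if \<rho> \<circ> \<tau> \<in> Q then h \<rho> else 0)"
    using finS by (intro sum.inter_filter finite_permutations)
  finally show ?thesis .
qed

lemma L_comult:
  fixes T :: "'a set" and Q :: "'a \<times> 'a \<Rightarrow> (nat \<Rightarrow> nat) set"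
  assumes fin: "finite T"
  and Qp: "\<And>A B. A \<in> T \<Longrightarrow> B \<in> T \<Longrightarrow> Q (A,B) \<subseteq> {\<sigma>. \<sigma> permutes {1..n}}"
  and b1: "\<And>A B C. A \<in> T \<Longrightarrow> B \<in> T \<Longrightarrow> C \<in> T \<Longrightarrow> A \<noteq> B \<Longrightarrow> Q (A,C) \<inter> Q (B,C) = {}"
  and d1: "\<And>A B \<rho> \<tau>. A \<in> T \<Longrightarrow> B \<in> T \<Longrightarrow> \<rho> permutes {1..n} \<Longrightarrow> \<tau> permutes {1..n} \<Longrightarrow>
     \<rho> \<circ> \<tau> \<in> Q (A,B) \<Longrightarrow> \<exists>C\<in>T. \<rho> \<in> Q (A,C) \<and> \<tau> \<in> Q (C,B)"
  and d2: "\<And>A B C \<rho> \<tau>. A \<in> T \<Longrightarrow> B \<in> T \<Longrightarrow> C \<in> T \<Longrightarrow> \<rho> \<in> Q (A,C) \<Longrightarrow> \<tau> \<in> Q (C,B) \<Longrightarrow> \<rho> \<circ> \<tau> \<in> Q (A,B)"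
  and p: "p \<in> polys (T \<times> T)"
  shows "peval PConst (comult {1..n}) (peval PConst (Pm n Q :: _ \<Rightarrow> (nat \<times> nat, 'g::comm_monoid_add) mpol) p)
        - peval PConst (\<lambda>w. case w of Inl v \<Rightarrow> prename Inl (Pm n Q v :: (nat \<times> nat, 'g) mpol) | Inr v \<Rightarrow> prename Inr (Pm n Q v))
              (peval PConst (comult T) p) \<in> Mideal2 {1..n}"
proof -
  define S where "S = {1..n}"
  have finS: "finite S" by (simp add: S_def)
  let ?V = "Inl ` (S \<times> S) \<union> Inr ` (S \<times> S)"
  let ?Rl = "Mrels_emb Inl S \<union> Mrels_emb Inr S :: ((nat \<times> nat) + (nat \<times> nat), 'g) mpol set"
  let ?P = "Pm n Q :: _ \<Rightarrow> (nat \<times> nat, 'g) mpol"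
  let ?perms = "{\<tau>. \<tau> permutes S}"
  define Qc where "Qc w = (case w of Inl v \<Rightarrow> prename Inl (?P v) | Inr v \<Rightarrow> prename Inr (?P v))" for w
  define f1 where "f1 v = peval PConst (comult S) (?P v)" for v
  define f2 where "f2 v = peval PConst Qc (comult T v)" for v
  define g where "g \<rho> \<tau> = (XL S \<rho> * XR S \<tau> :: ((nat \<times> nat) + (nat \<times> nat), 'g) mpol)" for \<rho> \<tau>
  have Qp': "Q (A,B) \<subseteq> ?perms" if "A \<in> T" "B \<in> T" for A B using Qp[OF that] by (simp add: S_def)
  have finQ: "finite (Q (A,B))" if "A \<in> T" "B \<in> T" for A B
    using finite_subset[OF Qp'[OF that] finite_permutations[OF finS]] .
  have finP: "finite ?perms" by (rule finite_permutations[OF finS])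
  have e1: "peval PConst (comult S) (peval PConst ?P p) = peval PConst f1 p"
    unfolding f1_def by (rule peval_comp[OF rhom_PConst])
  have e2: "peval PConst Qc (peval PConst (comult T) p) = peval PConst f2 p"
    unfolding f2_def by (rule peval_comp[OF rhom_PConst])
  have f1v: "f1 (A,B) = (\<Sum>\<sigma>\<in>Q (A,B). \<Prod>k\<in>S. comult S (\<sigma> k, k))" for A B
    unfolding f1_def by (simp add: peval_Pm rhom_PConst S_def)
  have pre: "prename e (?P v) = (\<Sum>\<rho>\<in>Q v. \<Prod>k\<in>S. PVar (e (\<rho> k, k)))" for e :: "nat \<times> nat \<Rightarrow> (nat \<times> nat) + (nat \<times> nat)" and v
    unfolding prename_def by (simp add: peval_Pm rhom_PConst S_def)
  have f2v: "f2 (A,B) = (\<Sum>C\<in>T. (\<Sum>\<rho>\<in>Q (A,C). XL S \<rho>) * (\<Sum>\<tau>\<in>Q (C,B). XR S \<tau>))" for A B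
    unfolding f2_def comult_eq
    by (simp add: peval_sum[OF rhom_PConst] peval_mult[OF rhom_PConst] rhom_PConst Qc_def pre XL_def XR_def)
  define M where "M A B = (\<Sum>\<rho>\<in>?perms. \<Sum>\<tau>\<in>?perms. if \<rho> \<circ> \<tau> \<in> Q (A,B) then g \<rho> \<tau> else 0)" for A B
  have step1: "f1 (A,B) - (\<Sum>\<sigma>\<in>Q (A,B). \<Sum>\<tau>\<in>?perms. g (\<sigma> \<circ> inv' \<tau>) \<tau>) \<in> gen_ideal ?V ?Rl"
    if "A \<in> T" "B \<in> T" for A B
  proof -
    have "f1 (A,B) - (\<Sum>\<sigma>\<in>Q (A,B). \<Sum>\<tau>\<in>?perms. g (\<sigma> \<circ> inv' \<tau>) \<tau>) =
        (\<Sum>\<sigma>\<in>Q (A,B). (\<Prod>k\<in>S. comult S (\<sigma> k, k)) - (\<Sum>\<tau>\<in>?perms. g (\<sigma> \<circ> inv' \<tau>) \<tau>))"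
      by (simp add: f1v sum_subtractf)
    also have "\<dots> \<in> gen_ideal ?V ?Rl"
    proof (rule gi_sum)
      fix \<sigma> assume "\<sigma> \<in> Q (A,B)"
      then have "\<sigma> permutes S" using Qp'[OF that] by auto
      from key_comult[OF finS this, where 'g='g]
      show "(\<Prod>k\<in>S. comult S (\<sigma> k, k)) - (\<Sum>\<tau>\<in>?perms. g (\<sigma> \<circ> inv' \<tau>) \<tau>) \<in> gen_ideal ?V ?Rl"
        by (simp add: g_def Mideal2_alt)
    qed
    finally show ?thesis .
  qed
  have step2: "(\<Sum>\<sigma>\<in>Q (A,B). \<Sum>\<tau>\<in>?perms. g (\<sigma> \<circ> inv' \<tau>) \<tau>) = M A B"
    if "A \<in> T" "B \<in> T" for A B
  proof -
    have "(\<Sum>\<sigma>\<in>Q (A,B). \<Sum>\<tau>\<in>?perms. g (\<sigma> \<circ> inv' \<tau>) \<tau>) = (\<Sum>\<tau>\<in>?perms. \<Sum>\<sigma>\<in>Q (A,B). g (\<sigma> \<circ> inv' \<tau>) \<tau>)"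
      by (rule sum.swap)
    also have "\<dots> = (\<Sum>\<tau>\<in>?perms. \<Sum>\<rho>\<in>?perms. if \<rho> \<circ> \<tau> \<in> Q (A,B) then g \<rho> \<tau> else 0)"
      by (rule sum.cong[OF refl], rule reindex_step[OF _ Qp'[OF that] finS]) simp
    also have "\<dots> = M A B" unfolding M_def by (rule sum.swap)
    finally show ?thesis .
  qed
  have step3: "f2 (A,B) = M A B" if AB: "A \<in> T" "B \<in> T" for A B
  proof -
    have "f2 (A,B) = (\<Sum>C\<in>T. \<Sum>\<rho>\<in>?perms. \<Sum>\<tau>\<in>?perms.
        if \<rho> \<in> Q (A,C) then (if \<tau> \<in> Q (C,B) then g \<rho> \<tau> else 0) else 0)"
    proof (unfold f2v, rule sum.cong[OF refl])
      fix C assume C: "C \<in> T"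
      have "(\<Sum>\<rho>\<in>Q (A,C). XL S \<rho>) * (\<Sum>\<tau>\<in>Q (C,B). XR S \<tau>) = (\<Sum>\<rho>\<in>Q (A,C). \<Sum>\<tau>\<in>Q (C,B). g \<rho> \<tau>)"
        unfolding g_def by (rule sum_product)
      also have "\<dots> = (\<Sum>\<rho>\<in>?perms. if \<rho> \<in> Q (A,C) then (\<Sum>\<tau>\<in>Q (C,B). g \<rho> \<tau>) else 0)"
        by (rule sum_sub_if[OF finP Qp'[OF AB(1) C]])
      also have "\<dots> = (\<Sum>\<rho>\<in>?perms. if \<rho> \<in> Q (A,C) then (\<Sum>\<tau>\<in>?perms. if \<tau> \<in> Q (C,B) then g \<rho> \<tau> else 0) else 0)"
        by (intro sum.cong refl if_cong sum_sub_if[OF finP Qp'[OF C AB(2)]])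
      also have "\<dots> = (\<Sum>\<rho>\<in>?perms. \<Sum>\<tau>\<in>?perms. if \<rho> \<in> Q (A,C) then (if \<tau> \<in> Q (C,B) then g \<rho> \<tau> else 0) else 0)"
        by (intro sum.cong refl) simp
      finally show "(\<Sum>\<rho>\<in>Q (A,C). XL S \<rho>) * (\<Sum>\<tau>\<in>Q (C,B). XR S \<tau>) = (\<Sum>\<rho>\<in>?perms. \<Sum>\<tau>\<in>?perms.
        if \<rho> \<in> Q (A,C) then (if \<tau> \<in> Q (C,B) then g \<rho> \<tau> else 0) else 0)" .
    qed
    also have "\<dots> = (\<Sum>\<rho>\<in>?perms. \<Sum>\<tau>\<in>?perms. \<Sum>C\<in>T.
        if \<rho> \<in> Q (A,C) then (if \<tau> \<in> Q (C,B) then g \<rho> \<tau> else 0) else 0)"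
      by (subst sum.swap, rule sum.cong[OF refl], rule sum.swap)
    also have "\<dots> = M A B"
      unfolding M_def
    proof (intro sum.cong refl)
      fix \<rho> \<tau> assume r: "\<rho> \<in> ?perms" and t: "\<tau> \<in> ?perms"
      show "(\<Sum>C\<in>T. if \<rho> \<in> Q (A,C) then (if \<tau> \<in> Q (C,B) then g \<rho> \<tau> else 0) else 0) =
          (if \<rho> \<circ> \<tau> \<in> Q (A,B) then g \<rho> \<tau> else 0)"
      proof (cases "\<rho> \<circ> \<tau> \<in> Q (A,B)")
        case True
        then obtain C0 where C0: "C0 \<in> T" "\<rho> \<in> Q (A,C0)" "\<tau> \<in> Q (C0,B)"
          using d1[OF AB] r t by (auto simp: S_def)
        have "(\<Sum>C\<in>T. if \<rho> \<in> Q (A,C) then (if \<tau> \<in> Q (C,B) then g \<rho> \<tau> else 0) else 0) =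
            (\<Sum>C\<in>T. if C = C0 then g \<rho> \<tau> else 0)"
        proof (intro sum.cong refl)
          fix C assume C: "C \<in> T"
          show "(if \<rho> \<in> Q (A,C) then (if \<tau> \<in> Q (C,B) then g \<rho> \<tau> else 0) else 0) = (if C = C0 then g \<rho> \<tau> else 0)"
          proof (cases "C = C0")
            case False
            then have "\<tau> \<notin> Q (C,B)" using b1[OF C C0(1) AB(2) False] C0(3) by blast
            then show ?thesis using False by simp
          qed (use C0 in simp)
        qed
        also have "\<dots> = g \<rho> \<tau>" using C0(1) fin by simp
        finally show ?thesis using True by simp
      next
        case False
        then show ?thesis using d2[OF AB(1) AB(2)] by (intro trans[OF sum.neutral]) auto
      qed
    qed
    finally show ?thesis .
  qed
  have polys1: "f1 v \<in> polys ?V" if vT: "v \<in> T \<times> T" for v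
  proof -
    obtain A B where AB: "v = (A,B)" "A \<in> T" "B \<in> T" using vT by (cases v) auto
    show ?thesis unfolding AB(1) f1v
    proof (intro polys_sum polys_prod polys_comult)
      fix \<sigma> k assume "\<sigma> \<in> Q (A,B)" "k \<in> S"
      then show "\<sigma> k \<in> S" "k \<in> S" using Qp'[OF AB(2,3)] by (auto simp: permutes_in_image)
    qed
  qed
  have polys2: "f2 v \<in> polys ?V" if vT: "v \<in> T \<times> T" for v
  proof -
    obtain A B where AB: "v = (A,B)" "A \<in> T" "B \<in> T" using vT by (cases v) auto
    show ?thesis unfolding AB(1) f2v
      by (intro polys_sum polys_mult polys_XL polys_XR) (use Qp' AB in auto)
  qed
  have "peval PConst f1 p - peval PConst f2 p \<in> gen_ideal ?V ?Rl"
  proof (rule gi_cong_peval[OF p])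
    fix v assume v: "v \<in> T \<times> T"
    then obtain A B where AB: "v = (A,B)" "A \<in> T" "B \<in> T" by (cases v) auto
    show "f1 v - f2 v \<in> gen_ideal ?V ?Rl"
      using step1[OF AB(2,3)] unfolding AB(1) step2[OF AB(2,3)] step3[OF AB(2,3)] .
    show "f1 v \<in> polys ?V" "f2 v \<in> polys ?V" using polys1[OF v] polys2[OF v] .
  qed
  then show ?thesis unfolding Mideal2_alt e1[unfolded S_def] e2[unfolded Qc_def] S_def .
qed

lemma core:
  fixes T :: "'a set" and Q :: "'a \<times> 'a \<Rightarrow> (nat \<Rightarrow> nat) set"
  assumes fin: "finite T"
  and Qp: "\<And>A B. A \<in> T \<Longrightarrow> B \<in> T \<Longrightarrow> Q (A,B) \<subseteq> {\<sigma>. \<sigma> permutes {1..n}}"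
  and b1: "\<And>A B C. A \<in> T \<Longrightarrow> B \<in> T \<Longrightarrow> C \<in> T \<Longrightarrow> A \<noteq> B \<Longrightarrow> Q (A,C) \<inter> Q (B,C) = {}"
  and b2: "\<And>A B C. A \<in> T \<Longrightarrow> B \<in> T \<Longrightarrow> C \<in> T \<Longrightarrow> A \<noteq> B \<Longrightarrow> Q (C,A) \<inter> Q (C,B) = {}"
  and c: "\<And>A B. A \<in> T \<Longrightarrow> B \<in> T \<Longrightarrow> (id \<in> Q (A,B)) = (A = B)"
  and d1: "\<And>A B \<rho> \<tau>. A \<in> T \<Longrightarrow> B \<in> T \<Longrightarrow> \<rho> permutes {1..n} \<Longrightarrow> \<tau> permutes {1..n} \<Longrightarrow>
     \<rho> \<circ> \<tau> \<in> Q (A,B) \<Longrightarrow> \<exists>C\<in>T. \<rho> \<in> Q (A,C) \<and> \<tau> \<in> Q (C,B)"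
  and d2: "\<And>A B C \<rho> \<tau>. A \<in> T \<Longrightarrow> B \<in> T \<Longrightarrow> C \<in> T \<Longrightarrow> \<rho> \<in> Q (A,C) \<Longrightarrow> \<tau> \<in> Q (C,B) \<Longrightarrow> \<rho> \<circ> \<tau> \<in> Q (A,B)"
  shows "Ghat_rep T {1..n} (Pm n Q :: _ \<Rightarrow> (nat \<times> nat, 'g::comm_monoid_add) mpol)"
  unfolding Ghat_rep_def bialg_hom_def
proof (intro conjI ballI)
  show "Pm n Q v \<in> polys ({1..n} \<times> {1..n})" if "v \<in> T \<times> T" for v
    using that Qp by (intro L_polys) auto
  show "peval PConst (Pm n Q :: _ \<Rightarrow> (nat \<times> nat, 'g) mpol) r \<in> Mideal {1..n}" if "r \<in> Mrels T" for r
    by (rule L_rels[where T=T and Q=Q and n=n, OF Qp b1 b2 that])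
  show "peval PConst (comult {1..n}) (peval PConst (Pm n Q :: _ \<Rightarrow> (nat \<times> nat, 'g) mpol) p)
        - peval PConst (\<lambda>w. case w of Inl v \<Rightarrow> prename Inl (Pm n Q v :: (nat \<times> nat, 'g) mpol) | Inr v \<Rightarrow> prename Inr (Pm n Q v))
              (peval PConst (comult T) p) \<in> Mideal2 {1..n}" if "p \<in> polys (T \<times> T)" for p
    by (rule L_comult[where T=T and Q=Q and n=n, OF fin Qp b1 d1 d2 that])
  show "peval id counit (peval PConst (Pm n Q :: _ \<Rightarrow> (nat \<times> nat, 'g) mpol) p) = peval id counit p"
    if "p \<in> polys (T \<times> T)" for p
    by (rule L_counit[where T=T and Q=Q and n=n, OF Qp c that])
  show "Ghat_linear T {1..n} (Pm n Q :: _ \<Rightarrow> (nat \<times> nat, 'g) mpol)"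
    by (rule L_ghat[where T=T and Q=Q and n=n, OF Qp])
qed

lemma pc1 [simp]: "p permutes S \<Longrightarrow> p \<circ> inv' p = id" by (rule permutes_inv_o(1))
lemma pc2 [simp]: "p permutes S \<Longrightarrow> inv' p \<circ> p = id" by (rule permutes_inv_o(2))
lemma pc3 [simp]: "p permutes S \<Longrightarrow> p \<circ> (inv' p \<circ> f) = f" by (simp add: o_assoc)
lemma pc4 [simp]: "p permutes S \<Longrightarrow> inv' p \<circ> (p \<circ> f) = f" by (simp add: o_assoc)
lemma pinv_inv [simp]: "p permutes S \<Longrightarrow> inv' (inv' p) = p"
  by (simp add: inv_inv_eq permutes_bij)
lemma pinv_comp: "p permutes S \<Longrightarrow> q permutes S \<Longrightarrow> inv' (p \<circ> q) = inv' q \<circ> inv' p"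
  by (simp add: o_inv_distrib permutes_bij)

lemma normal_facts:
  assumes "H \<lhd> sym_group n"
  shows "H \<subseteq> {p. p permutes {1..n}}" "id \<in> H"
    "\<And>h1 h2. h1 \<in> H \<Longrightarrow> h2 \<in> H \<Longrightarrow> h1 \<circ> h2 \<in> H"
    "\<And>h. h \<in> H \<Longrightarrow> inv' h \<in> H"
    "\<And>x h. x permutes {1..n} \<Longrightarrow> h \<in> H \<Longrightarrow> x \<circ> h \<circ> inv' x \<in> H"
proof -
  have sg: "subgroup H (sym_group n)" using assms by (rule normal_imp_subgroup)
  show "H \<subseteq> {p. p permutes {1..n}}" using subgroup.subset[OF sg] by (auto simp: sym_group_carrier)
  show "id \<in> H" using subgroup.one_closed[OF sg] by (simp add: sym_group_one)
  show "h1 \<circ> h2 \<in> H" if "h1 \<in> H" "h2 \<in> H" for h1 h2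
    using subgroup.m_closed[OF sg that] by (simp add: sym_group_mult)
  show "inv' h \<in> H" if "h \<in> H" for h
  proof -
    have "h \<in> carrier (sym_group n)" using subgroup.subset[OF sg] that by blast
    then show ?thesis using subgroup.m_inv_closed[OF sg that] by simp
  qed
  show "x \<circ> h \<circ> inv' x \<in> H" if "x permutes {1..n}" "h \<in> H" for x h
  proof -
    have x: "x \<in> carrier (sym_group n)" using that by (simp add: sym_group_carrier)
    from normal.inv_op_closed2[OF assms x that(2)] show ?thesis using x by (simp add: sym_group_mult)
  qed
qed

definition EE :: "nat \<Rightarrow> (nat \<Rightarrow> 'g) set" where
  "EE n = {1..n} \<rightarrow>\<^sub>E UNIV"

lemma EE_ne: "EE n \<noteq> {}"
  unfolding EE_def by (metis PiE_eq_empty_iff UNIV_not_empty)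

lemma wreath_carrier: "carrier (wreath n) = EE n \<times> {\<sigma>. \<sigma> permutes {1..n}}"
  by (simp add: wreath_def EE_def)

lemma wreath_mult: "(g,\<sigma>) \<otimes>\<^bsub>wreath n\<^esub> (h,\<tau>) = (restrict (\<lambda>k. g k + h (inv' \<sigma> k)) {1..n}, \<sigma> \<circ> \<tau>)"
  by (simp add: wreath_def)

lemma wreath_one: "\<one>\<^bsub>wreath n\<^esub> = (restrict (\<lambda>k. 0) {1..n}, id)"
  by (simp add: wreath_def)

lemma EE_restrict [simp]: "restrict f {1..n} \<in> EE n"
  by (simp add: EE_def)

lemma EE_restrict' [simp]: "restrict f {Suc 0..n} \<in> EE n"
  by (simp add: EE_def)

lemma EE_ext: "g \<in> EE n \<Longrightarrow> restrict g {1..n} = g"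
  by (simp add: EE_def PiE_restrict)

lemma wreath_group: "group (wreath n :: ((nat \<Rightarrow> 'g::ab_group_add) \<times> (nat \<Rightarrow> nat)) monoid)"
proof (rule groupI)
  fix x y :: "(nat \<Rightarrow> 'g) \<times> (nat \<Rightarrow> nat)"
  assume "x \<in> carrier (wreath n)" "y \<in> carrier (wreath n)"
  then show "x \<otimes>\<^bsub>wreath n\<^esub> y \<in> carrier (wreath n)"
    by (cases x, cases y) (auto simp: wreath_carrier wreath_mult permutes_compose)
next
  show "\<one>\<^bsub>wreath n\<^esub> \<in> carrier (wreath n :: ((nat \<Rightarrow> 'g::ab_group_add) \<times> (nat \<Rightarrow> nat)) monoid)"
    by (simp add: wreath_carrier wreath_one permutes_id)
next
  fix x y z :: "(nat \<Rightarrow> 'g) \<times> (nat \<Rightarrow> nat)"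
  assume xyz: "x \<in> carrier (wreath n)" "y \<in> carrier (wreath n)" "z \<in> carrier (wreath n)"
  obtain g \<sigma> where x: "x = (g,\<sigma>)" "\<sigma> permutes {1..n}" using xyz(1) by (cases x) (auto simp: wreath_carrier)
  obtain h \<tau> where y: "y = (h,\<tau>)" "\<tau> permutes {1..n}" using xyz(2) by (cases y) (auto simp: wreath_carrier)
  obtain l \<rho> where z: "z = (l,\<rho>)" "\<rho> permutes {1..n}" using xyz(3) by (cases z) (auto simp: wreath_carrier)
  have i: "inv' \<sigma> k \<in> {1..n}" if "k \<in> {1..n}" for k using perm_in[OF permutes_inv[OF x(2)] that] .
  show "x \<otimes>\<^bsub>wreath n\<^esub> y \<otimes>\<^bsub>wreath n\<^esub> z = x \<otimes>\<^bsub>wreath n\<^esub> (y \<otimes>\<^bsub>wreath n\<^esub> z)"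
    unfolding x y z wreath_mult
    using i by (auto simp: fun_eq_iff pinv_comp[OF x(2) y(2)] add.assoc comp_assoc)
next
  fix x :: "(nat \<Rightarrow> 'g) \<times> (nat \<Rightarrow> nat)"
  assume xc: "x \<in> carrier (wreath n)"
  obtain g \<sigma> where x: "x = (g,\<sigma>)" "\<sigma> permutes {1..n}" "g \<in> EE n" using xc by (cases x) (auto simp: wreath_carrier)
  show "\<one>\<^bsub>wreath n\<^esub> \<otimes>\<^bsub>wreath n\<^esub> x = x"
    unfolding x wreath_one wreath_mult
  proof (simp, rule ext)
    fix k
    have "k \<notin> {1..n} \<Longrightarrow> g k = undefined" using x(3) unfolding EE_def by (rule PiE_arb)
    then show "(\<lambda>k\<in>{Suc 0..n}. (if Suc 0 \<le> k \<and> k \<le> n then 0 else undefined) + g k) k = g k"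
      by (cases "k \<in> {1..n}") auto
  qed
  show "\<exists>y\<in>carrier (wreath n). y \<otimes>\<^bsub>wreath n\<^esub> x = \<one>\<^bsub>wreath n\<^esub>"
  proof (intro bexI)
    show "(restrict (\<lambda>k. - g (\<sigma> k)) {1..n}, inv' \<sigma>) \<otimes>\<^bsub>wreath n\<^esub> x = \<one>\<^bsub>wreath n\<^esub>"
      unfolding x wreath_one wreath_mult using x(2) by (auto simp: fun_eq_iff)
    show "(restrict (\<lambda>k. - g (\<sigma> k)) {1..n}, inv' \<sigma>) \<in> carrier (wreath n)"
      using x(2) by (simp add: wreath_carrier permutes_inv)
  qed
qed

definition cH :: "(nat \<Rightarrow> nat) set \<Rightarrow> (nat \<Rightarrow> nat) \<Rightarrow> (nat \<Rightarrow> nat) set" where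
  "cH H \<alpha> = (\<lambda>\<eta>. \<eta> \<circ> \<alpha>) ` H"

lemma coset_eq:
  fixes g :: "nat \<Rightarrow> 'g::ab_group_add"
  assumes Hp: "H \<subseteq> {p. p permutes {1..n}}" and g: "g \<in> EE n" and a: "\<alpha> permutes {1..n}"
  shows "wreath_sub n H #>\<^bsub>wreath n\<^esub> (g,\<alpha>) = EE n \<times> cH H \<alpha>"
proof (intro equalityI subsetI)
  fix x assume "x \<in> wreath_sub n H #>\<^bsub>wreath n\<^esub> (g,\<alpha>)"
  then obtain h \<eta> where "h \<in> EE n" "\<eta> \<in> H" "x = (h,\<eta>) \<otimes>\<^bsub>wreath n\<^esub> (g,\<alpha>)"
    unfolding r_coset_def wreath_sub_def EE_def by auto
  then show "x \<in> EE n \<times> cH H \<alpha>" by (simp add: wreath_mult cH_def)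
next
  fix x :: "(nat \<Rightarrow> 'g) \<times> (nat \<Rightarrow> nat)" assume "x \<in> EE n \<times> cH H \<alpha>"
  then obtain y \<eta> where y: "x = (y, \<eta> \<circ> \<alpha>)" "y \<in> EE n" "\<eta> \<in> H" by (auto simp: cH_def)
  define h where "h = restrict (\<lambda>k. y k - g (inv' \<eta> k)) {1..n}"
  have "(h,\<eta>) \<otimes>\<^bsub>wreath n\<^esub> (g,\<alpha>) = (restrict y {1..n}, \<eta> \<circ> \<alpha>)"
    by (simp add: wreath_mult h_def cong: restrict_cong)
  also have "\<dots> = x" using y EE_ext by simp
  finally have "x = (h,\<eta>) \<otimes>\<^bsub>wreath n\<^esub> (g,\<alpha>)" by simp
  moreover have "(h,\<eta>) \<in> wreath_sub n H" using y(3) by (simp add: wreath_sub_def h_def EE_def[symmetric])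
  ultimately show "x \<in> wreath_sub n H #>\<^bsub>wreath n\<^esub> (g,\<alpha>)" unfolding r_coset_def by blast
qed

lemma rcosets_eq:
  assumes Hp: "H \<subseteq> {p. p permutes {1..n}}"
  shows "carrier ((wreath n :: ((nat \<Rightarrow> 'g::ab_group_add) \<times> (nat \<Rightarrow> nat)) monoid) Mod wreath_sub n H)
     = (\<lambda>\<alpha>. (EE n :: (nat \<Rightarrow> 'g) set) \<times> cH H \<alpha>) ` {p. p permutes {1..n}}"
proof -
  obtain g0 where g0: "g0 \<in> (EE n :: (nat \<Rightarrow> 'g) set)" using EE_ne by blast
  have "carrier ((wreath n :: ((nat \<Rightarrow> 'g) \<times> (nat \<Rightarrow> nat)) monoid) Mod wreath_sub n H) = (\<Union>a\<in>carrier (wreath n). {wreath_sub n H #>\<^bsub>wreath n\<^esub> a})"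
    by (simp add: FactGroup_def RCOSETS_def)
  also have "\<dots> = (\<lambda>\<alpha>. EE n \<times> cH H \<alpha>) ` {p. p permutes {1..n}}"
  proof (intro equalityI subsetI)
    fix X :: "((nat \<Rightarrow> 'g) \<times> (nat \<Rightarrow> nat)) set"
    assume "X \<in> (\<Union>a\<in>carrier (wreath n). {wreath_sub n H #>\<^bsub>wreath n\<^esub> a})"
    then obtain g \<alpha> where "g \<in> EE n" "\<alpha> permutes {1..n}" "X = wreath_sub n H #>\<^bsub>wreath n\<^esub> (g,\<alpha>)"
      by (auto simp: wreath_carrier)
    then show "X \<in> (\<lambda>\<alpha>. EE n \<times> cH H \<alpha>) ` {p. p permutes {1..n}}" using coset_eq[OF Hp] by auto
  next
    fix X :: "((nat \<Rightarrow> 'g) \<times> (nat \<Rightarrow> nat)) set" assume "X \<in> (\<lambda>\<alpha>. EE n \<times> cH H \<alpha>) ` {p. p permutes {1..n}}"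
    then obtain \<alpha> where a: "\<alpha> permutes {1..n}" "X = EE n \<times> cH H \<alpha>" by auto
    then have "X = wreath_sub n H #>\<^bsub>wreath n\<^esub> (g0,\<alpha>)" using coset_eq[OF Hp g0 a(1)] by simp
    moreover have "(g0,\<alpha>) \<in> carrier (wreath n)" using g0 a by (simp add: wreath_carrier)
    ultimately show "X \<in> (\<Union>a\<in>carrier (wreath n). {wreath_sub n H #>\<^bsub>wreath n\<^esub> a})" by blast
  qed
  finally show ?thesis .
qed

definition QQ :: "nat \<Rightarrow> (('g \<times> (nat \<Rightarrow> nat)) set) \<times> (('g \<times> (nat \<Rightarrow> nat)) set) \<Rightarrow> (nat \<Rightarrow> nat) set" where
  "QQ n v = {\<sigma>. \<sigma> permutes {1..n} \<and> (\<exists>\<beta>\<in>snd ` snd v. \<sigma> \<circ> \<beta> \<in> snd ` fst v)}"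

lemma snd_EE: "snd ` (EE n \<times> X) = X"
  using EE_ne by (metis snd_image_times)

context
  fixes n :: nat and H :: "(nat \<Rightarrow> nat) set"
  assumes Hn: "H \<lhd> sym_group n"
begin

lemma Hp: "H \<subseteq> {p. p permutes {1..n}}" using normal_facts[OF Hn] by blast
lemma H1: "id \<in> H" using normal_facts[OF Hn] by blast
lemma H2: "h1 \<in> H \<Longrightarrow> h2 \<in> H \<Longrightarrow> h1 \<circ> h2 \<in> H" using normal_facts(3)[OF Hn] by blast
lemma H3: "h \<in> H \<Longrightarrow> inv' h \<in> H" using normal_facts(4)[OF Hn] by blast
lemma H4: "x permutes {1..n} \<Longrightarrow> h \<in> H \<Longrightarrow> x \<circ> h \<circ> inv' x \<in> H" using normal_facts(5)[OF Hn] by blast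
lemma Hperm: "h \<in> H \<Longrightarrow> h permutes {1..n}" using Hp by blast

lemma cH_mem:
  assumes a: "\<alpha> permutes {1..n}"
  shows "\<sigma> \<in> cH H \<alpha> \<longleftrightarrow> \<sigma> permutes {1..n} \<and> \<sigma> \<circ> inv' \<alpha> \<in> H"
proof
  assume "\<sigma> \<in> cH H \<alpha>"
  then obtain \<eta> where e: "\<eta> \<in> H" "\<sigma> = \<eta> \<circ> \<alpha>" by (auto simp: cH_def)
  then show "\<sigma> permutes {1..n} \<and> \<sigma> \<circ> inv' \<alpha> \<in> H"
    using a Hperm[OF e(1)] by (simp add: permutes_compose comp_assoc)
next
  assume s: "\<sigma> permutes {1..n} \<and> \<sigma> \<circ> inv' \<alpha> \<in> H"
  have "\<sigma> = (\<sigma> \<circ> inv' \<alpha>) \<circ> \<alpha>" using a by (simp add: comp_assoc)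
  then show "\<sigma> \<in> cH H \<alpha>" using s unfolding cH_def by blast
qed

lemma self_cH: "\<alpha> permutes {1..n} \<Longrightarrow> \<alpha> \<in> cH H \<alpha>"
  using cH_mem H1 by simp

lemma cH_eq:
  assumes a: "\<alpha> permutes {1..n}" and b: "\<beta> permutes {1..n}"
  shows "cH H \<alpha> = cH H \<beta> \<longleftrightarrow> \<alpha> \<circ> inv' \<beta> \<in> H"
proof
  assume "cH H \<alpha> = cH H \<beta>"
  then have "\<alpha> \<in> cH H \<beta>" using self_cH[OF a] by simp
  then show "\<alpha> \<circ> inv' \<beta> \<in> H" using cH_mem[OF b] by simp
next
  assume ab: "\<alpha> \<circ> inv' \<beta> \<in> H"
  have ba: "\<beta> \<circ> inv' \<alpha> \<in> H"
  proof -
    have "inv' (\<alpha> \<circ> inv' \<beta>) = \<beta> \<circ> inv' \<alpha>" using a b by (simp add: pinv_comp permutes_inv)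
    then show ?thesis using H3[OF ab] by simp
  qed
  show "cH H \<alpha> = cH H \<beta>"
  proof (intro equalityI subsetI)
    fix x assume "x \<in> cH H \<alpha>"
    then have x: "x permutes {1..n}" "x \<circ> inv' \<alpha> \<in> H" using cH_mem[OF a] by auto
    have "x \<circ> inv' \<beta> = (x \<circ> inv' \<alpha>) \<circ> (\<alpha> \<circ> inv' \<beta>)" using a by (simp add: comp_assoc)
    then show "x \<in> cH H \<beta>" using cH_mem[OF b] x H2[OF x(2) ab] by simp
  next
    fix x assume "x \<in> cH H \<beta>"
    then have x: "x permutes {1..n}" "x \<circ> inv' \<beta> \<in> H" using cH_mem[OF b] by auto
    have "x \<circ> inv' \<alpha> = (x \<circ> inv' \<beta>) \<circ> (\<beta> \<circ> inv' \<alpha>)" using b by (simp add: comp_assoc)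
    then show "x \<in> cH H \<alpha>" using cH_mem[OF a] x H2[OF x(2) ba] by simp
  qed
qed

lemma T_eq:
  assumes a: "\<alpha> permutes {1..n}" and b: "\<beta> permutes {1..n}"
  shows "(EE n :: (nat \<Rightarrow> 'g) set) \<times> cH H \<alpha> = EE n \<times> cH H \<beta> \<longleftrightarrow> \<alpha> \<circ> inv' \<beta> \<in> H"
proof -
  have "(EE n :: (nat \<Rightarrow> 'g) set) \<times> cH H \<alpha> = EE n \<times> cH H \<beta> \<longleftrightarrow> cH H \<alpha> = cH H \<beta>"
    by (metis snd_EE)
  then show ?thesis using cH_eq[OF a b] by simp
qed

lemma Q_mem:
  assumes a: "\<alpha> permutes {1..n}" and b: "\<beta> permutes {1..n}"
  shows "\<sigma> \<in> QQ n ((EE n :: (nat \<Rightarrow> 'g) set) \<times> cH H \<alpha>, EE n \<times> cH H \<beta>) \<longleftrightarrow>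
     \<sigma> permutes {1..n} \<and> \<sigma> \<circ> (\<beta> \<circ> inv' \<alpha>) \<in> H"
proof
  assume "\<sigma> \<in> QQ n ((EE n :: (nat \<Rightarrow> 'g) set) \<times> cH H \<alpha>, EE n \<times> cH H \<beta>)"
  then obtain b' where s: "\<sigma> permutes {1..n}" "b' \<in> cH H \<beta>" "\<sigma> \<circ> b' \<in> cH H \<alpha>"
    unfolding QQ_def by (auto simp: snd_EE EE_ne)
  obtain \<eta> where e: "\<eta> \<in> H" "b' = \<eta> \<circ> \<beta>" using s(2) by (auto simp: cH_def)
  have ep: "\<eta> permutes {1..n}" using Hperm[OF e(1)] .
  define x where "x = \<sigma> \<circ> (\<eta> \<circ> (\<beta> \<circ> inv' \<alpha>))"
  have x: "x \<in> H" using s(3) cH_mem[OF a] unfolding x_def e(2) by (simp add: comp_assoc)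
  define c where "c = \<alpha> \<circ> inv' \<beta>"
  have cp: "c permutes {1..n}" unfolding c_def using a b by (simp add: permutes_compose permutes_inv)
  have "x \<circ> (c \<circ> inv' \<eta> \<circ> inv' c) = \<sigma> \<circ> (\<beta> \<circ> inv' \<alpha>)"
    unfolding x_def c_def using a b ep by (simp add: pinv_comp permutes_inv comp_assoc)
  moreover have "x \<circ> (c \<circ> inv' \<eta> \<circ> inv' c) \<in> H" using H2[OF x H4[OF cp H3[OF e(1)]]] .
  ultimately show "\<sigma> permutes {1..n} \<and> \<sigma> \<circ> (\<beta> \<circ> inv' \<alpha>) \<in> H" using s(1) by simp
next
  assume s: "\<sigma> permutes {1..n} \<and> \<sigma> \<circ> (\<beta> \<circ> inv' \<alpha>) \<in> H"
  have "\<sigma> \<circ> \<beta> \<in> cH H \<alpha>" using s a b cH_mem[OF a] by (simp add: permutes_compose comp_assoc)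
  then show "\<sigma> \<in> QQ n ((EE n :: (nat \<Rightarrow> 'g) set) \<times> cH H \<alpha>, EE n \<times> cH H \<beta>)"
    unfolding QQ_def using s self_cH[OF b] by (auto simp: snd_EE EE_ne)
qed

end


context
  fixes n :: nat and H :: "(nat \<Rightarrow> nat) set"
  assumes Hn: "H \<lhd> sym_group n"
begin

lemma R_p: "\<alpha> permutes {1..n} \<Longrightarrow> \<beta> permutes {1..n} \<Longrightarrow> QQ n (((EE n :: (nat \<Rightarrow> 'g) set) \<times> cH H \<alpha>), ((EE n :: (nat \<Rightarrow> 'g) set) \<times> cH H \<beta>)) \<subseteq> {\<sigma>. \<sigma> permutes {1..n}}"
  using Q_mem[OF Hn] by blast

lemma R_b1:
  assumes a: "\<alpha> permutes {1..n}" and b: "\<beta> permutes {1..n}" and c: "\<gamma> permutes {1..n}"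
    and s1: "\<sigma> \<in> QQ n (((EE n :: (nat \<Rightarrow> 'g) set) \<times> cH H \<alpha>), ((EE n :: (nat \<Rightarrow> 'g) set) \<times> cH H \<gamma>))" and s2: "\<sigma> \<in> QQ n (((EE n :: (nat \<Rightarrow> 'g) set) \<times> cH H \<beta>), ((EE n :: (nat \<Rightarrow> 'g) set) \<times> cH H \<gamma>))"
  shows "\<alpha> \<circ> inv' \<beta> \<in> H"
proof -
  have x: "\<sigma> \<circ> (\<gamma> \<circ> inv' \<alpha>) \<in> H" and s: "\<sigma> permutes {1..n}" using s1 Q_mem[OF Hn a c] by auto
  have y: "\<sigma> \<circ> (\<gamma> \<circ> inv' \<beta>) \<in> H" using s2 Q_mem[OF Hn b c] by auto
  have "inv' (\<sigma> \<circ> (\<gamma> \<circ> inv' \<alpha>)) \<circ> (\<sigma> \<circ> (\<gamma> \<circ> inv' \<beta>)) = \<alpha> \<circ> inv' \<beta>"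
    using a b c s by (simp add: pinv_comp permutes_inv permutes_compose comp_assoc)
  then show ?thesis using H2[OF Hn H3[OF Hn x] y] by simp
qed

lemma R_b2:
  assumes a: "\<alpha> permutes {1..n}" and b: "\<beta> permutes {1..n}" and c: "\<gamma> permutes {1..n}"
    and s1: "\<sigma> \<in> QQ n (((EE n :: (nat \<Rightarrow> 'g) set) \<times> cH H \<gamma>), ((EE n :: (nat \<Rightarrow> 'g) set) \<times> cH H \<alpha>))" and s2: "\<sigma> \<in> QQ n (((EE n :: (nat \<Rightarrow> 'g) set) \<times> cH H \<gamma>), ((EE n :: (nat \<Rightarrow> 'g) set) \<times> cH H \<beta>))"
  shows "\<alpha> \<circ> inv' \<beta> \<in> H"
proof -
  have x: "\<sigma> \<circ> (\<alpha> \<circ> inv' \<gamma>) \<in> H" and s: "\<sigma> permutes {1..n}" using s1 Q_mem[OF Hn c a] by auto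
  have y: "\<sigma> \<circ> (\<beta> \<circ> inv' \<gamma>) \<in> H" using s2 Q_mem[OF Hn c b] by auto
  define z1 where "z1 = inv' (\<sigma> \<circ> (\<beta> \<circ> inv' \<gamma>)) \<circ> (\<sigma> \<circ> (\<alpha> \<circ> inv' \<gamma>))"
  have z1: "z1 \<in> H" unfolding z1_def using H2[OF Hn H3[OF Hn y] x] .
  have ic: "inv' \<gamma> permutes {1..n}" using c by (rule permutes_inv)
  define z2 where "z2 = inv' \<gamma> \<circ> z1 \<circ> inv' (inv' \<gamma>)"
  have z2: "z2 \<in> H" unfolding z2_def using H4[OF Hn ic z1] .
  define z3 where "z3 = \<beta> \<circ> z2 \<circ> inv' \<beta>"
  have z3: "z3 \<in> H" unfolding z3_def using H4[OF Hn b z2] .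
  have "z3 = \<alpha> \<circ> inv' \<beta>"
    unfolding z3_def z2_def z1_def
    using a b c s by (simp add: pinv_comp permutes_inv permutes_compose comp_assoc)
  then show ?thesis using z3 by simp
qed

lemma R_c:
  assumes a: "\<alpha> permutes {1..n}" and b: "\<beta> permutes {1..n}"
  shows "id \<in> QQ n (((EE n :: (nat \<Rightarrow> 'g) set) \<times> cH H \<alpha>), ((EE n :: (nat \<Rightarrow> 'g) set) \<times> cH H \<beta>)) \<longleftrightarrow> \<alpha> \<circ> inv' \<beta> \<in> H"
proof -
  note Q_mem[OF Hn a b, of id]
  then have "id \<in> QQ n (((EE n :: (nat \<Rightarrow> 'g) set) \<times> cH H \<alpha>), ((EE n :: (nat \<Rightarrow> 'g) set) \<times> cH H \<beta>)) \<longleftrightarrow> \<beta> \<circ> inv' \<alpha> \<in> H" using Q_mem[OF Hn a b] by (simp add: permutes_id)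
  also have "\<dots> \<longleftrightarrow> \<alpha> \<circ> inv' \<beta> \<in> H"
  proof
    assume "\<beta> \<circ> inv' \<alpha> \<in> H"
    from H3[OF Hn this] show "\<alpha> \<circ> inv' \<beta> \<in> H" using a b by (simp add: pinv_comp permutes_inv)
  next
    assume "\<alpha> \<circ> inv' \<beta> \<in> H"
    from H3[OF Hn this] show "\<beta> \<circ> inv' \<alpha> \<in> H" using a b by (simp add: pinv_comp permutes_inv)
  qed
  finally show ?thesis .
qed

lemma R_d1:
  assumes a: "\<alpha> permutes {1..n}" and b: "\<beta> permutes {1..n}" and r: "\<rho> permutes {1..n}" and t: "\<tau> permutes {1..n}"
    and s: "\<rho> \<circ> \<tau> \<in> QQ n (((EE n :: (nat \<Rightarrow> 'g) set) \<times> cH H \<alpha>), ((EE n :: (nat \<Rightarrow> 'g) set) \<times> cH H \<beta>))"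
  shows "\<rho> \<in> QQ n (((EE n :: (nat \<Rightarrow> 'g) set) \<times> cH H \<alpha>), ((EE n :: (nat \<Rightarrow> 'g) set) \<times> cH H (\<tau> \<circ> \<beta>))) \<and> \<tau> \<in> QQ n (((EE n :: (nat \<Rightarrow> 'g) set) \<times> cH H (\<tau> \<circ> \<beta>)), ((EE n :: (nat \<Rightarrow> 'g) set) \<times> cH H \<beta>))"
proof
  have tb: "\<tau> \<circ> \<beta> permutes {1..n}" by (rule permutes_compose[OF b t])
  have "\<rho> \<circ> \<tau> \<circ> (\<beta> \<circ> inv' \<alpha>) \<in> H" using s Q_mem[OF Hn a b, of "\<rho> \<circ> \<tau>"] by auto
  then show "\<rho> \<in> QQ n (((EE n :: (nat \<Rightarrow> 'g) set) \<times> cH H \<alpha>), ((EE n :: (nat \<Rightarrow> 'g) set) \<times> cH H (\<tau> \<circ> \<beta>)))" using Q_mem[OF Hn a tb, of \<rho>] r by (simp add: comp_assoc)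
  have "\<tau> \<circ> (\<beta> \<circ> inv' (\<tau> \<circ> \<beta>)) = id" using t b by (simp add: pinv_comp comp_assoc)
  then show "\<tau> \<in> QQ n (((EE n :: (nat \<Rightarrow> 'g) set) \<times> cH H (\<tau> \<circ> \<beta>)), ((EE n :: (nat \<Rightarrow> 'g) set) \<times> cH H \<beta>))" using Q_mem[OF Hn tb b, of \<tau>] t H1[OF Hn] by simp
qed

lemma R_d2:
  assumes a: "\<alpha> permutes {1..n}" and b: "\<beta> permutes {1..n}" and c: "\<gamma> permutes {1..n}"
    and r: "\<rho> \<in> QQ n (((EE n :: (nat \<Rightarrow> 'g) set) \<times> cH H \<alpha>), ((EE n :: (nat \<Rightarrow> 'g) set) \<times> cH H \<gamma>))" and t: "\<tau> \<in> QQ n (((EE n :: (nat \<Rightarrow> 'g) set) \<times> cH H \<gamma>), ((EE n :: (nat \<Rightarrow> 'g) set) \<times> cH H \<beta>))"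
  shows "\<rho> \<circ> \<tau> \<in> QQ n (((EE n :: (nat \<Rightarrow> 'g) set) \<times> cH H \<alpha>), ((EE n :: (nat \<Rightarrow> 'g) set) \<times> cH H \<beta>))"
proof -
  have x: "\<rho> \<circ> (\<gamma> \<circ> inv' \<alpha>) \<in> H" and rp: "\<rho> permutes {1..n}" using r Q_mem[OF Hn a c] by auto
  have y: "\<tau> \<circ> (\<beta> \<circ> inv' \<gamma>) \<in> H" and tp: "\<tau> permutes {1..n}" using t Q_mem[OF Hn c b] by auto
  define k where "k = \<alpha> \<circ> inv' \<gamma>"
  have kp: "k permutes {1..n}" unfolding k_def using a c by (simp add: permutes_compose permutes_inv)
  have "(\<rho> \<circ> (\<gamma> \<circ> inv' \<alpha>)) \<circ> (k \<circ> (\<tau> \<circ> (\<beta> \<circ> inv' \<gamma>)) \<circ> inv' k) = \<rho> \<circ> \<tau> \<circ> (\<beta> \<circ> inv' \<alpha>)"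
    unfolding k_def using a b c by (simp add: pinv_comp permutes_inv comp_assoc)
  moreover have "(\<rho> \<circ> (\<gamma> \<circ> inv' \<alpha>)) \<circ> (k \<circ> (\<tau> \<circ> (\<beta> \<circ> inv' \<gamma>)) \<circ> inv' k) \<in> H"
    using H2[OF Hn x H4[OF Hn kp y]] .
  ultimately show ?thesis using Q_mem[OF Hn a b, of "\<rho> \<circ> \<tau>"] rp tp by (simp add: permutes_compose)
qed

end

lemma card_T:
  assumes Hn: "H \<lhd> sym_group n"
  shows "card (carrier ((wreath n :: ((nat \<Rightarrow> 'g::ab_group_add) \<times> (nat \<Rightarrow> nat)) monoid) Mod wreath_sub n H))
   = card (carrier (sym_group n)) div card H"
proof -
  let ?W = "wreath n :: ((nat \<Rightarrow> 'g) \<times> (nat \<Rightarrow> nat)) monoid"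
  let ?K = "wreath_sub n H :: ((nat \<Rightarrow> 'g) \<times> (nat \<Rightarrow> nat)) set"
  let ?T = "carrier (?W Mod ?K)"
  let ?X = "\<lambda>\<alpha>. (EE n :: (nat \<Rightarrow> 'g) set) \<times> cH H \<alpha>"
  let ?perms = "{p. p permutes {1..n}}"
  have Hp': "H \<subseteq> ?perms" by (rule Hp[OF Hn])
  have Tdef: "?T = ?X ` ?perms" by (rule rcosets_eq[OF Hp'])
  have finP: "finite ?perms" by (rule finite_permutations) simp
  have sg: "subgroup H (sym_group n)" using Hn by (rule normal_imp_subgroup)
  have rc: "rcosets\<^bsub>sym_group n\<^esub> H = cH H ` ?perms"
    by (auto simp: RCOSETS_def r_coset_def cH_def sym_group_carrier sym_group_mult)
  have im: "?X ` ?perms = (\<lambda>Y. (EE n :: (nat \<Rightarrow> 'g) set) \<times> Y) ` (cH H ` ?perms)"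
    by (simp add: image_image)
  have inj: "inj_on (\<lambda>Y. (EE n :: (nat \<Rightarrow> 'g) set) \<times> Y) Z" for Z
  proof (rule inj_onI)
    fix Y1 Y2 assume "(EE n :: (nat \<Rightarrow> 'g) set) \<times> Y1 = EE n \<times> Y2"
    then show "Y1 = Y2" by (metis snd_EE)
  qed
  have "card ?T = card (cH H ` ?perms)"
    unfolding Tdef im by (rule card_image[OF inj])
  also have "\<dots> = card (rcosets\<^bsub>sym_group n\<^esub> H)" by (simp add: rc)
  finally have 1: "card ?T = card (rcosets\<^bsub>sym_group n\<^esub> H)" .
  have 2: "card (rcosets\<^bsub>sym_group n\<^esub> H) * card H = card (carrier (sym_group n))"
    using group.lagrange[OF sym_group_is_group sg] by (simp add: order_def)
  have "finite H" using finite_subset[OF Hp' finP] .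
  then have 3: "card H > 0" using H1[OF Hn] by (auto simp: card_gt_0_iff)
  show ?thesis unfolding 1 2[symmetric] using 3 by simp
qed

theorem mainTheorem17:
  fixes n :: nat and H :: "(nat \<Rightarrow> nat) set"
  assumes "finite (UNIV :: 'g::{ab_group_add} set)"
    and "n > 0"
    and "H \<lhd> sym_group n"
  shows "\<exists>P :: ((nat \<Rightarrow> 'g) \<times> (nat \<Rightarrow> nat)) set \<times> ((nat \<Rightarrow> 'g) \<times> (nat \<Rightarrow> nat)) set
                 \<Rightarrow> (nat \<times> nat, 'g) mpol.
           Ghat_rep (carrier (wreath n Mod wreath_sub n H)) {1..n} P
         \<and> card (carrier (wreath n Mod wreath_sub n H)) = card (carrier (sym_group n)) div card H
         \<and> (\<forall>a\<in>carrier (wreath n). \<forall>b\<in>carrier (wreath n).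
              P (wreath_sub n H #>\<^bsub>wreath n\<^esub> a, wreath_sub n H #>\<^bsub>wreath n\<^esub> b)
              - (\<Sum>\<sigma>\<in>Pset n (wreath_sub n H #>\<^bsub>wreath n\<^esub> (a \<otimes>\<^bsub>wreath n\<^esub> inv\<^bsub>wreath n\<^esub> b)). xperm n \<sigma>)
              \<in> Mideal {1..n})"
  proof -
  let ?W = "wreath n :: ((nat \<Rightarrow> 'g) \<times> (nat \<Rightarrow> nat)) monoid"
  let ?K = "wreath_sub n H :: ((nat \<Rightarrow> 'g) \<times> (nat \<Rightarrow> nat)) set"
  let ?T = "carrier (?W Mod ?K)"
  let ?X = "\<lambda>\<alpha>. (EE n :: (nat \<Rightarrow> 'g) set) \<times> cH H \<alpha>"
  let ?perms = "{p. p permutes {1..n}}"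
  have Hn: "H \<lhd> sym_group n" by (rule assms(3))
  have Hp': "H \<subseteq> ?perms" by (rule Hp[OF Hn])
  have Tdef: "?T = ?X ` ?perms" by (rule rcosets_eq[OF Hp'])
  have finP: "finite ?perms" by (rule finite_permutations) simp
  have memT: "\<exists>\<alpha>. \<alpha> permutes {1..n} \<and> A = ?X \<alpha>" if "A \<in> ?T" for A
    using that unfolding Tdef by blast
  have XT: "?X \<alpha> \<in> ?T" if "\<alpha> permutes {1..n}" for \<alpha> using that unfolding Tdef by blast
  have rep: "Ghat_rep ?T {1..n} (Pm n (QQ n) :: _ \<Rightarrow> (nat \<times> nat, 'g) mpol)"
  proof (rule core)
    show "finite ?T" unfolding Tdef using finP by simp
    show "QQ n (A, B) \<subseteq> ?perms" if h: "A \<in> ?T" "B \<in> ?T" for A B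
      using memT[OF h(1)] memT[OF h(2)] R_p[OF Hn] by blast
    show "QQ n (A, C) \<inter> QQ n (B, C) = {}" if h: "A \<in> ?T" "B \<in> ?T" "C \<in> ?T" "A \<noteq> B" for A B C
    proof -
      obtain \<alpha> where a: "\<alpha> permutes {1..n}" "A = ?X \<alpha>" using memT[OF h(1)] by blast
      obtain \<beta> where b: "\<beta> permutes {1..n}" "B = ?X \<beta>" using memT[OF h(2)] by blast
      obtain \<gamma> where c: "\<gamma> permutes {1..n}" "C = ?X \<gamma>" using memT[OF h(3)] by blast
      have "\<alpha> \<circ> inv' \<beta> \<notin> H" using T_eq[OF Hn a(1) b(1), where 'g='g] h(4) a b by simp
      then show ?thesis using R_b1[OF Hn a(1) b(1) c(1)] a b c by blast
    qed
    show "QQ n (C, A) \<inter> QQ n (C, B) = {}" if h: "A \<in> ?T" "B \<in> ?T" "C \<in> ?T" "A \<noteq> B" for A B C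
    proof -
      obtain \<alpha> where a: "\<alpha> permutes {1..n}" "A = ?X \<alpha>" using memT[OF h(1)] by blast
      obtain \<beta> where b: "\<beta> permutes {1..n}" "B = ?X \<beta>" using memT[OF h(2)] by blast
      obtain \<gamma> where c: "\<gamma> permutes {1..n}" "C = ?X \<gamma>" using memT[OF h(3)] by blast
      have "\<alpha> \<circ> inv' \<beta> \<notin> H" using T_eq[OF Hn a(1) b(1), where 'g='g] h(4) a b by simp
      then show ?thesis using R_b2[OF Hn a(1) b(1) c(1)] a b c by blast
    qed
    show "(id \<in> QQ n (A, B)) = (A = B)" if h: "A \<in> ?T" "B \<in> ?T" for A B
    proof -
      obtain \<alpha> where a: "\<alpha> permutes {1..n}" "A = ?X \<alpha>" using memT[OF h(1)] by blast
      obtain \<beta> where b: "\<beta> permutes {1..n}" "B = ?X \<beta>" using memT[OF h(2)] by blast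
      show ?thesis using T_eq[OF Hn a(1) b(1), where 'g='g] R_c[OF Hn a(1) b(1), where 'g='g] a b by simp
    qed
    show "\<exists>C\<in>?T. \<rho> \<in> QQ n (A, C) \<and> \<tau> \<in> QQ n (C, B)"
      if h: "A \<in> ?T" "B \<in> ?T" "\<rho> permutes {1..n}" "\<tau> permutes {1..n}" "\<rho> \<circ> \<tau> \<in> QQ n (A, B)" for A B \<rho> \<tau>
    proof -
      obtain \<alpha> where a: "\<alpha> permutes {1..n}" "A = ?X \<alpha>" using memT[OF h(1)] by blast
      obtain \<beta> where b: "\<beta> permutes {1..n}" "B = ?X \<beta>" using memT[OF h(2)] by blast
      have "?X (\<tau> \<circ> \<beta>) \<in> ?T" using XT permutes_compose[OF b(1) h(4)] by blast
      then show ?thesis using R_d1[OF Hn a(1) b(1) h(3) h(4)] h(5) a b by blast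
    qed
    show "\<rho> \<circ> \<tau> \<in> QQ n (A, B)"
      if h: "A \<in> ?T" "B \<in> ?T" "C \<in> ?T" "\<rho> \<in> QQ n (A, C)" "\<tau> \<in> QQ n (C, B)" for A B C \<rho> \<tau>
    proof -
      obtain \<alpha> where a: "\<alpha> permutes {1..n}" "A = ?X \<alpha>" using memT[OF h(1)] by blast
      obtain \<beta> where b: "\<beta> permutes {1..n}" "B = ?X \<beta>" using memT[OF h(2)] by blast
      obtain \<gamma> where c: "\<gamma> permutes {1..n}" "C = ?X \<gamma>" using memT[OF h(3)] by blast
      show ?thesis using R_d2[OF Hn a(1) b(1) c(1)] h(4,5) a b c by blast
    qed
  qed
  have third: "Pm n (QQ n) (?K #>\<^bsub>?W\<^esub> a, ?K #>\<^bsub>?W\<^esub> b)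
      - (\<Sum>\<sigma>\<in>Pset n (?K #>\<^bsub>?W\<^esub> (a \<otimes>\<^bsub>?W\<^esub> inv\<^bsub>?W\<^esub> b)). xperm n \<sigma>)
      \<in> (Mideal {1..n} :: (nat \<times> nat, 'g) mpol set)"
    if ab: "a \<in> carrier ?W" "b \<in> carrier ?W" for a b
  proof -
    have grp: "group ?W" by (rule wreath_group)
    obtain g \<alpha> where a: "a = (g,\<alpha>)" "g \<in> EE n" "\<alpha> permutes {1..n}" using ab(1) by (cases a) (auto simp: wreath_carrier)
    obtain h \<beta> where b: "b = (h,\<beta>)" "h \<in> EE n" "\<beta> permutes {1..n}" using ab(2) by (cases b) (auto simp: wreath_carrier)
    have ib: "inv\<^bsub>?W\<^esub> b \<in> carrier ?W" using group.inv_closed[OF grp ab(2)] .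
    obtain u v where uv: "inv\<^bsub>?W\<^esub> b = (u,v)" "u \<in> EE n" "v permutes {1..n}"
      using ib by (cases "inv\<^bsub>?W\<^esub> b") (auto simp: wreath_carrier)
    have "inv\<^bsub>?W\<^esub> b \<otimes>\<^bsub>?W\<^esub> b = \<one>\<^bsub>?W\<^esub>" using group.l_inv[OF grp ab(2)] .
    then have vb0: "v \<circ> \<beta> = id" using uv b by (simp add: wreath_mult wreath_one)
    have "v = v \<circ> (\<beta> \<circ> inv' \<beta>)" using b(3) by simp
    also have "\<dots> = (v \<circ> \<beta>) \<circ> inv' \<beta>" by (simp only: o_assoc)
    also have "\<dots> = inv' \<beta>" using vb0 by simp
    finally have vb: "v = inv' \<beta>" .
    obtain w where c: "a \<otimes>\<^bsub>?W\<^esub> inv\<^bsub>?W\<^esub> b = (w, \<alpha> \<circ> inv' \<beta>)" "w \<in> EE n"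
      using a uv vb by (simp add: wreath_mult)
    have abp: "\<alpha> \<circ> inv' \<beta> permutes {1..n}" using a b by (simp add: permutes_compose permutes_inv)
    have cs: "?K #>\<^bsub>?W\<^esub> (a \<otimes>\<^bsub>?W\<^esub> inv\<^bsub>?W\<^esub> b) = ?X (\<alpha> \<circ> inv' \<beta>)"
      unfolding c(1) by (rule coset_eq[OF Hp' c(2) abp])
    have "Pset n (?X (\<alpha> \<circ> inv' \<beta>)) = QQ n (?X \<alpha>, ?X \<beta>)"
    proof (intro equalityI subsetI)
      fix \<sigma> assume "\<sigma> \<in> Pset n (?X (\<alpha> \<circ> inv' \<beta>))"
      then have s: "\<sigma> permutes {1..n}" "\<sigma> \<in> cH H (\<alpha> \<circ> inv' \<beta>)"
        unfolding Pset_def EE_def[symmetric] using EE_ne by auto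
      then have "\<sigma> \<circ> inv' (\<alpha> \<circ> inv' \<beta>) \<in> H" using cH_mem[OF Hn abp] by simp
      then show "\<sigma> \<in> QQ n (?X \<alpha>, ?X \<beta>)" using Q_mem[OF Hn a(3) b(3), of \<sigma>] s a b
        by (simp add: pinv_comp permutes_inv)
    next
      fix \<sigma> assume "\<sigma> \<in> QQ n (?X \<alpha>, ?X \<beta>)"
      then have s: "\<sigma> permutes {1..n}" "\<sigma> \<circ> (\<beta> \<circ> inv' \<alpha>) \<in> H" using Q_mem[OF Hn a(3) b(3), of \<sigma>] by auto
      then have "\<sigma> \<in> cH H (\<alpha> \<circ> inv' \<beta>)" using cH_mem[OF Hn abp] a b by (simp add: pinv_comp permutes_inv)
      then show "\<sigma> \<in> Pset n (?X (\<alpha> \<circ> inv' \<beta>))" unfolding Pset_def EE_def[symmetric] using s by auto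
    qed
    then have "Pset n (?K #>\<^bsub>?W\<^esub> (a \<otimes>\<^bsub>?W\<^esub> inv\<^bsub>?W\<^esub> b)) = QQ n (?K #>\<^bsub>?W\<^esub> a, ?K #>\<^bsub>?W\<^esub> b)"
    proof -
      have ka: "?K #>\<^bsub>?W\<^esub> a = ?X \<alpha>" unfolding a(1) by (rule coset_eq[OF Hp' a(2) a(3)])
      have kb: "?K #>\<^bsub>?W\<^esub> b = ?X \<beta>" unfolding b(1) by (rule coset_eq[OF Hp' b(2) b(3)])
      show ?thesis unfolding cs ka kb by fact
    qed
    then show ?thesis by (simp add: Pm_def)
  qed
  show ?thesis
    apply (rule exI[of _ "Pm n (QQ n)"])
    apply (intro conjI ballI)
      apply (rule rep)
     apply (rule card_T[OF Hn])
    apply (rule third)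
     apply assumption+
    done
qed

end
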